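(* Let $v=\sum_{\alpha\in\{0,1\}^n}f_\alpha\omega_\alpha\in\mathcal P^\omega_n$ with $f_\alpha\in\mathcal P_n$. Then $v\in\Lambda^\omega_n$ if and only if for every $k=0,1,\dots,n$ the polynomial $F_k:=f_{\tau^{(k)}}$ satisfies (i) $F_k\in\mathcal P_n^{S_{n-k}\times S_k}$, and (ii) $f_\alpha=\partial_{\sigma_\alpha}(F_k)$ for every $\alpha\in(\mathbb Z_2^n)_k$.
   Context: Let $\mathcal P_n=\mathbb Q[x_1,\dots,x_n]$ and $\mathcal P^\omega_n=\mathcal P_n\otimes\bigwedge[\omega_1,\dots,\omega_n]$ ($\omega_i$ odd, commuting with the $x_j$). $S_n$ acts on $\mathcal P^\omega_n$ by ring automorphisms via $s_i(x_j)=x_{s_i(j)}$, $s_i(\omega_j)=\omega_j+\delta_{ij}(x_j-x_{j+1})\omega_{j+1}$; $\Lambda^\omega_n=(\mathcal P^\omega_n)^{S_n}$. $\partial_i=(1-s_i)/(x_i-x_{i+1})$ on $\mathcal P_n$, and $\partial_w=\partial_{i_1}\cdots\partial_{i_m}$ for a reduced expression $w=s_{i_1}\cdots s_{i_m}$. For $\alpha\in\{0,1\}^n$, $\omega_\alpha=\omega_1^{\alpha_1}\cdots\omega_n^{\alpha_n}$, $(\mathbb Z_2^n)_k=\{\alpha:\sum\alpha_i=k\}$, $\tau^{(k)}=(0,\dots,0,1,\dots,1)$ ($n-k$ zeros followed by $k$ ones). For $\alpha\in(\mathbb Z_2^n)_k$ with zeros at positions $v_1<\dots<v_{n-k}$ and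 ones at $u_1<\dots<u_k$, $\sigma_\alpha\in S_n$ is given by $\sigma_\alpha(i)=v_i$ ($i\le n-k$), $\sigma_\alpha(i)=u_{i-n+k}$ ($i>n-k$). $\mathcal P_n^{S_{n-k}\times S_k}$ denotes polynomials symmetric separately in $x_1,\dots,x_{n-k}$ and in $x_{n-k+1},\dots,x_n$. *)

theory Defs
  imports Complex_Main "HOL-Library.Poly_Mapping" "HOL-Combinatorics.Permutations"
begin

type_synonym mpoly = "(nat \<Rightarrow>\<^sub>0 nat) \<Rightarrow>\<^sub>0 rat"

definition Var :: "nat \<Rightarrow> mpoly" where
  "Var i = Poly_Mapping.single (Poly_Mapping.single i 1) 1"

definition Pn :: "nat \<Rightarrow> mpoly set" where
  "Pn n = {p. \<forall>m \<in> Poly_Mapping.keys p. Poly_Mapping.keys m \<subseteq> {1..n}}"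

text \<open>Action of a permutation w of the variable indices: w(x_j) = x_(w j).
  The monomial with exponents m goes to the one with exponents m o w^-1,
  so the coefficient of m in w(p) is the coefficient of m o w in p.\<close>
definition perm_poly :: "(nat \<Rightarrow> nat) \<Rightarrow> mpoly \<Rightarrow> mpoly" where
  "perm_poly w p =
     Abs_poly_mapping (\<lambda>m. Poly_Mapping.lookup p
        (Abs_poly_mapping (Poly_Mapping.lookup m \<circ> w)))"

definition s :: "nat \<Rightarrow> nat \<Rightarrow> nat" where
  "s i = Transposition.transpose i (Suc i)"

definition dd :: "nat \<Rightarrow> mpoly \<Rightarrow> mpoly" where
  "dd i f = (THE g. (Var i - Var (Suc i)) * g = f - perm_poly (s i) f)"

definition inv_count :: "nat \<Rightarrow> (nat \<Rightarrow> nat) \<Rightarrow> nat" where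
  "inv_count n w = card {(i, j). 1 \<le> i \<and> i < j \<and> j \<le> n \<and> w j < w i}"

definition reduced_word :: "nat \<Rightarrow> (nat \<Rightarrow> nat) \<Rightarrow> nat list \<Rightarrow> bool" where
  "reduced_word n w is \<longleftrightarrow>
     (\<forall>i \<in> set is. 1 \<le> i \<and> i < n) \<and>
     w = foldr (\<lambda>i acc. s i \<circ> acc) is id \<and>
     length is = inv_count n w"

text \<open>partial_w = partial_(i_1) ... partial_(i_m) for a reduced expression
  (independent of the choice of reduced expression).\<close>
definition dd_perm :: "nat \<Rightarrow> (nat \<Rightarrow> nat) \<Rightarrow> mpoly \<Rightarrow> mpoly" where
  "dd_perm n w f = foldr dd (SOME is. reduced_word n w is) f"

text \<open>Elements of P^omega_n are represented by their coefficient families: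
  alpha in {0,1}^n is identified with the set of positions where alpha_i = 1,
  and v = sum_A f A * omega_A with omega_A the increasing product.\<close>
type_synonym spoly = "nat set \<Rightarrow> mpoly"

definition sgn_pair :: "nat set \<Rightarrow> nat set \<Rightarrow> mpoly" where
  "sgn_pair A B = (- 1) ^ card {(a, b). a \<in> A \<and> b \<in> B \<and> b < a}"

text \<open>Product in P_n tensor the exterior algebra: omega_A omega_B = sign * omega_(A u B).\<close>
definition smult :: "spoly \<Rightarrow> spoly \<Rightarrow> spoly" where
  "smult u v = (\<lambda>C. \<Sum>A \<in> Pow C. sgn_pair A (C - A) * u A * v (C - A))"

definition sadd :: "spoly \<Rightarrow> spoly \<Rightarrow> spoly" where
  "sadd u v = (\<lambda>C. u C + v C)"

definition sconst :: "mpoly \<Rightarrow> spoly" where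
  "sconst p = (\<lambda>A. if A = {} then p else 0)"

definition omega :: "nat \<Rightarrow> spoly" where
  "omega j = (\<lambda>A. if A = {j} then 1 else 0)"

definition s_omega :: "nat \<Rightarrow> nat \<Rightarrow> spoly" where
  "s_omega i j = (if j = i then sadd (omega j) (smult (sconst (Var j - Var (Suc j))) (omega (Suc j)))
                  else omega j)"

definition s_act :: "nat \<Rightarrow> nat \<Rightarrow> spoly \<Rightarrow> spoly" where
  "s_act n i v = (\<lambda>C. \<Sum>A \<in> Pow {1..n}.
      smult (sconst (perm_poly (s i) (v A)))
            (foldr (\<lambda>j acc. smult (s_omega i j) acc) (sorted_list_of_set A) (sconst 1)) C)"

text \<open>Lambda^omega_n: the S_n-invariants, S_n acting through the generators s_1..s_(n-1).\<close>
definition in_Lambda :: "nat \<Rightarrow> spoly \<Rightarrow> bool" where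
  "in_Lambda n v \<longleftrightarrow> (\<forall>i. 1 \<le> i \<and> i < n \<longrightarrow> s_act n i v = v)"

definition sym_block :: "nat \<Rightarrow> nat \<Rightarrow> mpoly set" where
  "sym_block n k = {p \<in> Pn n. \<forall>w. w permutes {1..n} \<and> w ` {1..n-k} = {1..n-k}
                                  \<longrightarrow> perm_poly w p = p}"

definition tau :: "nat \<Rightarrow> nat \<Rightarrow> nat set" where
  "tau n k = {n - k + 1..n}"

definition sigma :: "nat \<Rightarrow> nat set \<Rightarrow> nat \<Rightarrow> nat" where
  "sigma n A i =
     (if 1 \<le> i \<and> i \<le> n - card A then sorted_list_of_set ({1..n} - A) ! (i - 1)
      else if n - card A < i \<and> i \<le> n then sorted_list_of_set A ! (i - (n - card A) - 1)
      else i)"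

end

theory Submission
  imports Defs
begin


definition phi :: "(nat \<Rightarrow> nat) \<Rightarrow> (nat \<Rightarrow>\<^sub>0 nat) \<Rightarrow> (nat \<Rightarrow>\<^sub>0 nat)" where
  "phi w m = Abs_poly_mapping (Poly_Mapping.lookup m \<circ> w)"

lemma lookup_phi: "inj w \<Longrightarrow> Poly_Mapping.lookup (phi w m) = Poly_Mapping.lookup m \<circ> w"
proof -
  assume "inj w"
  have "{k. (Poly_Mapping.lookup m \<circ> w) k \<noteq> 0} = w -` Poly_Mapping.keys m"
    by (auto simp: in_keys_iff)
  moreover have "finite (w -` Poly_Mapping.keys m)"
    using \<open>inj w\<close> by (intro finite_vimageI) auto
  ultimately show ?thesis unfolding phi_def by (subst lookup_Abs_poly_mapping) auto
qed

lemma phi_comp: "inj w1 \<Longrightarrow> inj w2 \<Longrightarrow> phi w2 (phi w1 m) = phi (w1 \<circ> w2) m"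
  by (rule poly_mapping_eqI) (simp add: lookup_phi inj_compose)

lemma phi_id: "phi id m = m"
  by (rule poly_mapping_eqI) (simp add: lookup_phi)

lemma phi_add: "inj w \<Longrightarrow> phi w (m + m') = phi w m + phi w m'"
  by (rule poly_mapping_eqI) (simp add: lookup_phi lookup_add)

lemma phi_zero: "inj w \<Longrightarrow> phi w 0 = 0"
  by (rule poly_mapping_eqI) (simp add: lookup_phi)

lemma phi_inv: "bij w \<Longrightarrow> phi (inv w) (phi w m) = m"
proof -
  assume b: "bij w"
  have "inj w" using b by (rule bij_is_inj)
  have "inj (inv w)" by (rule bij_is_inj[OF bij_imp_bij_inv[OF b]])
  have "w \<circ> inv w = id" using bij_is_surj[OF b] by (rule surj_iff[THEN iffD1])
  note this \<open>inj w\<close> \<open>inj (inv w)\<close>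
  then show ?thesis using phi_comp[of w "inv w" m] phi_id by simp
qed

lemma phi_inv2: "bij w \<Longrightarrow> phi w (phi (inv w) m) = m"
proof -
  assume b: "bij w"
  have "inj w" using b by (rule bij_is_inj)
  have "inj (inv w)" by (rule bij_is_inj[OF bij_imp_bij_inv[OF b]])
  have "inv w \<circ> w = id" using \<open>inj w\<close> by (rule inj_iff[THEN iffD1])
  note this \<open>inj w\<close> \<open>inj (inv w)\<close>
  then show ?thesis using phi_comp[of "inv w" w m] phi_id by simp
qed

lemma phi_single: "bij w \<Longrightarrow> phi (inv w) (Poly_Mapping.single j 1) = Poly_Mapping.single (w j) 1"
  apply (rule poly_mapping_eqI)
  apply (simp add: lookup_phi bij_is_inj bij_imp_bij_inv lookup_single when_def)
  by (metis bij_inv_eq_iff)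

lemma lookup_perm: "bij w \<Longrightarrow> Poly_Mapping.lookup (perm_poly w p) m = Poly_Mapping.lookup p (phi w m)"
proof -
  assume b: "bij w"
  have "{m. Poly_Mapping.lookup p (phi w m) \<noteq> 0} \<subseteq> phi (inv w) ` Poly_Mapping.keys p"
  proof
    fix m assume "m \<in> {m. Poly_Mapping.lookup p (phi w m) \<noteq> 0}"
    then have "phi w m \<in> Poly_Mapping.keys p" by (simp add: in_keys_iff)
    then show "m \<in> phi (inv w) ` Poly_Mapping.keys p" using phi_inv[OF b, of m] by (metis image_eqI)
  qed
  then have "finite {m. Poly_Mapping.lookup p (phi w m) \<noteq> 0}"
    by (rule finite_surj[OF finite_keys])
  then show ?thesis unfolding perm_poly_def
    by (subst lookup_Abs_poly_mapping) (auto simp: phi_def[symmetric])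
qed

lemma perm_comp: "bij w1 \<Longrightarrow> bij w2 \<Longrightarrow> perm_poly w1 (perm_poly w2 p) = perm_poly (w1 \<circ> w2) p"
  by (rule poly_mapping_eqI) (simp add: lookup_perm bij_comp phi_comp bij_is_inj)

lemma perm_id: "perm_poly id p = p"
  by (rule poly_mapping_eqI) (simp add: lookup_perm phi_id)

lemma perm_add: "bij w \<Longrightarrow> perm_poly w (p + q) = perm_poly w p + perm_poly w q"
  by (rule poly_mapping_eqI) (simp add: lookup_perm lookup_add)

lemma perm_minus: "bij w \<Longrightarrow> perm_poly w (p - q) = perm_poly w p - perm_poly w q"
  by (rule poly_mapping_eqI) (simp add: lookup_perm lookup_minus)

lemma perm_uminus: "bij w \<Longrightarrow> perm_poly w (- p) = - perm_poly w p"
  by (rule poly_mapping_eqI) (simp add: lookup_perm)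

lemma perm_zero: "bij w \<Longrightarrow> perm_poly w 0 = 0"
  by (rule poly_mapping_eqI) (simp add: lookup_perm)

lemma perm_sum: "bij w \<Longrightarrow> perm_poly w (sum g S) = (\<Sum>x\<in>S. perm_poly w (g x))"
  by (induction S rule: infinite_finite_induct) (auto simp: perm_zero perm_add)

lemma perm_single: "bij w \<Longrightarrow> perm_poly w (Poly_Mapping.single m c) = Poly_Mapping.single (phi (inv w) m) c"
  apply (rule poly_mapping_eqI)
  apply (simp add: lookup_perm lookup_single when_def)
  by (metis phi_inv phi_inv2)

lemma poly_sum_single: "(p::mpoly) = (\<Sum>m\<in>Poly_Mapping.keys p. Poly_Mapping.single m (Poly_Mapping.lookup p m))"
proof (rule poly_mapping_eqI)
  fix k
  show "Poly_Mapping.lookup p k = Poly_Mapping.lookup (\<Sum>m\<in>Poly_Mapping.keys p. Poly_Mapping.single m (Poly_Mapping.lookup p m)) k"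
    by (simp add: lookup_sum lookup_single when_def in_keys_iff)
qed

lemma perm_mult: "bij w \<Longrightarrow> perm_poly w (p * q) = perm_poly w p * perm_poly w (q::mpoly)"
proof -
  assume b: "bij w"
  have bi: "inj (inv w)" using b bij_imp_bij_inv bij_is_inj by blast
  let ?P = "Poly_Mapping.keys p" and ?Q = "Poly_Mapping.keys q"
  have "p * q = (\<Sum>m\<in>?P. Poly_Mapping.single m (Poly_Mapping.lookup p m)) * (\<Sum>m\<in>?Q. Poly_Mapping.single m (Poly_Mapping.lookup q m))"
    using poly_sum_single[of p] poly_sum_single[of q] by simp
  also have "\<dots> = (\<Sum>m\<in>?P. \<Sum>m'\<in>?Q. Poly_Mapping.single (m + m') (Poly_Mapping.lookup p m * Poly_Mapping.lookup q m'))"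
    by (simp add: sum_product mult_single)
  finally have pq: "p * q = \<dots>" .
  have "perm_poly w (p * q) = (\<Sum>m\<in>?P. \<Sum>m'\<in>?Q. Poly_Mapping.single (phi (inv w) m + phi (inv w) m') (Poly_Mapping.lookup p m * Poly_Mapping.lookup q m'))"
    unfolding pq by (simp add: perm_sum b perm_single phi_add bi)
  also have "\<dots> = (\<Sum>m\<in>?P. Poly_Mapping.single (phi (inv w) m) (Poly_Mapping.lookup p m)) * (\<Sum>m\<in>?Q. Poly_Mapping.single (phi (inv w) m) (Poly_Mapping.lookup q m))"
    by (simp add: sum_product mult_single)
  also have "\<dots> = perm_poly w p * perm_poly w q"
    apply (subst (3) poly_sum_single[of p]) apply (subst (3) poly_sum_single[of q])
    by (simp add: perm_sum b perm_single)
  finally show ?thesis .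
qed

lemma perm_one: "bij w \<Longrightarrow> perm_poly w 1 = 1"
proof -
  assume b: "bij w"
  have bi: "inj (inv w)" using b bij_imp_bij_inv bij_is_inj by blast
  have "perm_poly w (Poly_Mapping.single 0 1) = Poly_Mapping.single 0 1"
    by (simp only: perm_single[OF b] phi_zero[OF bi])
  then show ?thesis by simp
qed

lemma perm_Var: "bij w \<Longrightarrow> perm_poly w (Var j) = Var (w j)"
  unfolding Var_def by (simp only: perm_single phi_single)

lemma perm_power: "bij w \<Longrightarrow> perm_poly w (p ^ k) = perm_poly w p ^ k"
  by (induction k) (simp_all add: perm_one perm_mult)



subsection \<open>Simple transpositions and divided differences\<close>

abbreviation S :: "nat \<Rightarrow> mpoly \<Rightarrow> mpoly" where "S i \<equiv> perm_poly (s i)"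

lemma bij_s [simp]: "bij (s i)" by (simp add: s_def)
lemma inv_s [simp]: "inv (s i) = s i" by (simp add: s_def)
lemma s_s [simp]: "s i \<circ> s i = id" by (simp add: s_def)
lemma s_apply: "s i j = (if j = i then Suc i else if j = Suc i then i else j)"
  by (simp add: s_def transpose_def)

lemma SS [simp]: "S i (S i f) = f"
  by (simp add: perm_comp perm_id)

lemma S_Var: "S i (Var j) = Var (s i j)" by (simp add: perm_Var)

lemma S_mult: "S i (p * q) = S i p * S i q" by (simp add: perm_mult)
lemma S_add: "S i (p + q) = S i p + S i q" by (simp add: perm_add)
lemma S_diff: "S i (p - q) = S i p - S i q" by (simp add: perm_minus)
lemma S_uminus: "S i (- p) = - S i p" by (simp add: perm_uminus)
lemma S_zero: "S i 0 = 0" by (simp add: perm_zero)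
lemma S_sum: "S i (sum g A) = (\<Sum>x\<in>A. S i (g x))" by (simp add: perm_sum)

lemma Var_inj: "Var i = Var j \<longleftrightarrow> i = j"
  unfolding Var_def by (metis inj_single injD lookup_single_eq lookup_single_not_eq one_neq_zero)

lemma adiff_nz: "Var i - Var (Suc i) \<noteq> 0"
  using Var_inj[of i "Suc i"] by simp

lemma dvd_pow_diff: "((x::'a::comm_ring_1) - y) dvd (x ^ d - y ^ d)"
  by (simp add: power_diff_sumr2)

lemma dvd_pow_diff2: "((x::'a::comm_ring_1) - y) dvd (x ^ a * y ^ b - y ^ a * x ^ b)"
proof (cases "b \<le> a")
  case True
  then obtain d where a: "a = b + d" using le_Suc_ex by blast
  have "x ^ a * y ^ b - y ^ a * x ^ b = (x ^ b * y ^ b) * (x ^ d - y ^ d)"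
    unfolding a by (simp add: power_add algebra_simps)
  then show ?thesis using dvd_pow_diff[of x y d] by (metis dvd_mult)
next
  case False
  then obtain d where b: "b = a + d" by (metis le_Suc_ex nat_le_linear)
  have "x ^ a * y ^ b - y ^ a * x ^ b = - ((x ^ a * y ^ a) * (x ^ d - y ^ d))"
    unfolding b by (simp add: power_add algebra_simps)
  then show ?thesis using dvd_pow_diff[of x y d] by (metis dvd_minus_iff dvd_mult)
qed

lemma single_Var_pow: "Poly_Mapping.single (Poly_Mapping.single i a) 1 = Var i ^ a"
proof (induction a)
  case 0 then show ?case by simp
next
  case (Suc a)
  have "Var i ^ Suc a = Var i * Poly_Mapping.single (Poly_Mapping.single i a) 1" using Suc by simp
  also have "\<dots> = Poly_Mapping.single (Poly_Mapping.single i 1 + Poly_Mapping.single i a) 1"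
    unfolding Var_def by (simp only: mult_single mult_1)
  also have "\<dots> = Poly_Mapping.single (Poly_Mapping.single i (Suc a)) 1"
    by (simp add: single_add[symmetric])
  finally show ?case by simp
qed

lemma dvd_single: "(Var i - Var (Suc i)) dvd (Poly_Mapping.single m c - S i (Poly_Mapping.single m c))"
proof -
  define a where "a = Poly_Mapping.lookup m i"
  define b where "b = Poly_Mapping.lookup m (Suc i)"
  define r where "r = m - Poly_Mapping.single i a - Poly_Mapping.single (Suc i) b"
  have m: "m = r + Poly_Mapping.single i a + Poly_Mapping.single (Suc i) b"
    by (rule poly_mapping_eqI) (auto simp: r_def a_def b_def lookup_add lookup_minus lookup_single when_def)
  have sm: "phi (s i) m = r + Poly_Mapping.single (Suc i) a + Poly_Mapping.single i b"
    by (rule poly_mapping_eqI) (auto simp: lookup_phi r_def a_def b_def lookup_add lookup_minus lookup_single when_def s_apply bij_is_inj)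
  have e1: "Poly_Mapping.single m c = Poly_Mapping.single r c * (Var i ^ a * Var (Suc i) ^ b)"
    by (subst m) (simp add: single_Var_pow[symmetric] mult_single add.assoc)
  have e2: "S i (Poly_Mapping.single m c) = Poly_Mapping.single r c * (Var (Suc i) ^ a * Var i ^ b)"
  proof -
    have "S i (Poly_Mapping.single m c) = Poly_Mapping.single (phi (s i) m) c" using perm_single[of "s i" m c] by simp
    also have "\<dots> = Poly_Mapping.single r c * (Var (Suc i) ^ a * Var i ^ b)"
      unfolding sm by (simp add: single_Var_pow[symmetric] mult_single add.assoc)
    finally show ?thesis .
  qed
  have "Poly_Mapping.single m c - S i (Poly_Mapping.single m c) = Poly_Mapping.single r c * (Var i ^ a * Var (Suc i) ^ b - Var (Suc i) ^ a * Var i ^ b)"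
    apply (subst e2) apply (subst e1) by (simp add: algebra_simps)
  then show ?thesis using dvd_pow_diff2 by (metis dvd_mult)
qed

lemma dvd_all: "(Var i - Var (Suc i)) dvd (f - S i f)"
proof -
  have "(Var i - Var (Suc i)) dvd ((\<Sum>m\<in>M. Poly_Mapping.single m (Poly_Mapping.lookup f m)) - S i (\<Sum>m\<in>M. Poly_Mapping.single m (Poly_Mapping.lookup f m)))" for M
  proof (induction M rule: infinite_finite_induct)
    case (insert x F)
    then show ?case
      using dvd_add[OF dvd_single[of i x "Poly_Mapping.lookup f x"] insert(3)]
      by (simp add: S_add algebra_simps)
  qed (simp_all add: S_zero)
  then show ?thesis using poly_sum_single[of f] by metis
qed

lemma dd_char: "(Var i - Var (Suc i)) * dd i f = f - S i f"
proof -
  obtain g where g: "f - S i f = (Var i - Var (Suc i)) * g" using dvd_all by (metis dvdE)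
  have "\<exists>!g. (Var i - Var (Suc i)) * g = f - S i f"
    using g adiff_nz by (metis mult_left_cancel)
  then show ?thesis unfolding dd_def by (rule theI')
qed

lemma dd_unique: "(Var i - Var (Suc i)) * g = f - S i f \<Longrightarrow> dd i f = g"
  using dd_char[of i f] adiff_nz by (metis mult_left_cancel)

lemma S_adiff: "S i (Var i - Var (Suc i)) = - (Var i - Var (Suc i))"
  by (simp add: S_diff S_Var s_apply)

lemma dd_sym: "S i (dd i f) = dd i f"
proof -
  have "- (Var i - Var (Suc i)) * S i (dd i f) = S i ((Var i - Var (Suc i)) * dd i f)" by (simp only: S_mult S_adiff)
  also have "\<dots> = S i f - f" by (simp only: dd_char S_diff SS)
  finally have "- (Var i - Var (Suc i)) * S i (dd i f) = S i f - f" .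
  then have "(Var i - Var (Suc i)) * S i (dd i f) = f - S i f" by (simp add: algebra_simps)
  then show ?thesis using dd_unique by metis
qed

lemma dd_zero_iff: "dd i f = 0 \<longleftrightarrow> S i f = f"
  using dd_char[of i f] adiff_nz by (metis eq_iff_diff_eq_0 mult_zero_right no_zero_divisors)

lemma dd_0: "dd i 0 = 0" by (simp add: dd_zero_iff S_zero)



lemma s_comm: "Suc j < i \<or> Suc i < j \<Longrightarrow> s i \<circ> s j = s j \<circ> s i"
  by (auto simp: fun_eq_iff s_apply)

lemma S_comm: "Suc j < i \<or> Suc i < j \<Longrightarrow> S i (S j f) = S j (S i f)"
  using s_comm by (metis perm_comp bij_s)

lemma S_dd_comm: assumes "Suc j < i \<or> Suc i < j" shows "S j (dd i f) = dd i (S j f)"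
proof -
  from assms have ne: "i \<noteq> j" "i \<noteq> Suc j" "Suc i \<noteq> j" "Suc i \<noteq> Suc j" by auto
  have "S j ((Var i - Var (Suc i)) * dd i f) = S j (f - S i f)" by (simp only: dd_char)
  then have "(Var i - Var (Suc i)) * S j (dd i f) = S j f - S j (S i f)"
    using ne by (simp add: S_mult S_diff S_Var s_apply)
  also have "S j (S i f) = S i (S j f)" using S_comm assms by metis
  finally show ?thesis by (metis dd_unique)
qed

lemma dd_comm: assumes "Suc j < i \<or> Suc i < j" shows "dd i (dd j f) = dd j (dd i f)"
proof -
  let ?a = "Var i - Var (Suc i)" and ?b = "Var j - Var (Suc j)"
  have as: "Suc i < j \<or> Suc j < i" using assms by auto
  have c1: "?a * dd i g = g - S i g" for g by (rule dd_char)
  have c2: "?b * dd j g = g - S j g" for g by (rule dd_char)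
  have 1: "?a * ?b * dd i (dd j f) = f - S j f - S i f + S i (S j f)"
  proof -
    have "?a * ?b * dd i (dd j f) = ?b * (?a * dd i (dd j f))" by (simp add: ac_simps)
    also have "\<dots> = ?b * dd j f - ?b * S i (dd j f)" by (simp only: c1 right_diff_distrib)
    also have "S i (dd j f) = dd j (S i f)" using S_dd_comm as by metis
    also have "?b * dd j f - ?b * dd j (S i f) = f - S j f - (S i f - S j (S i f))" by (simp only: c2)
    also have "S j (S i f) = S i (S j f)" using S_comm assms by metis
    finally show ?thesis by simp
  qed
  have 2: "?a * ?b * dd j (dd i f) = f - S i f - S j f + S j (S i f)"
  proof -
    have "?a * ?b * dd j (dd i f) = ?a * (?b * dd j (dd i f))" by (simp add: ac_simps)
    also have "\<dots> = ?a * dd i f - ?a * S j (dd i f)" by (simp only: c2 right_diff_distrib)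
    also have "S j (dd i f) = dd i (S j f)" using S_dd_comm assms by metis
    also have "?a * dd i f - ?a * dd i (S j f) = f - S i f - (S j f - S i (S j f))" by (simp only: c1)
    also have "S i (S j f) = S j (S i f)" using S_comm assms by metis
    finally show ?thesis by simp
  qed
  have "?a * ?b \<noteq> 0" using adiff_nz by simp
  moreover have "?a * ?b * dd i (dd j f) = ?a * ?b * dd j (dd i f)"
    unfolding 1 2 using S_comm[OF assms, of f] by simp
  ultimately show ?thesis by simp
qed



lemma braid_alg:
  fixes a1 a2 a3 f sf tf tsf stf stsf g1 g2 g3 sg2 tg1 stg1 :: "'a::comm_ring_1"
  assumes "a3 = a1 + a2" "a1 * g1 = f - sf" "a2 * g2 = g1 - tg1" "a1 * g3 = g2 - sg2"
    "a3 * sg2 = g1 - stg1" "a3 * tg1 = tf - tsf" "a2 * stg1 = stf - stsf"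
  shows "a1 * (a1 * a2 * a3 * g3) = a1 * (f - sf - tf + tsf + stf - stsf)"
proof -
  have e: "a1 * (a1 * a2 * a3 * g3) - a1 * (f - sf - tf + tsf + stf - stsf) =
    a1 * a2 * a3 * (a1 * g3 - (g2 - sg2)) + a1 * a3 * (a2 * g2 - (g1 - tg1))
    - a1 * a2 * (a3 * sg2 - (g1 - stg1)) + a1 * (a1 * g1 - (f - sf))
    - a1 * (a3 * tg1 - (tf - tsf)) + a1 * (a2 * stg1 - (stf - stsf))"
    unfolding assms(1) by (simp add: algebra_simps)
  have "a1 * (a1 * a2 * a3 * g3) - a1 * (f - sf - tf + tsf + stf - stsf) = 0"
    unfolding e using assms(2-) by simp
  then show ?thesis by simp
qed

abbreviation Af :: "nat \<Rightarrow> mpoly" where "Af j \<equiv> Var j - Var (Suc j)"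

lemma braid_half:
  assumes "S p (Af q) = a3" "S q (Af p) = a3" "S p a3 = Af q" "a3 = Af p + Af q"
  shows "Af p * (Af p * Af q * a3 * dd p (dd q (dd p f))) =
         Af p * (f - S p f - S q f + S q (S p f) + S p (S q f) - S p (S q (S p f)))"
proof -
  define g1 where "g1 = dd p f"
  define g2 where "g2 = dd q g1"
  define g3 where "g3 = dd p g2"
  have H1: "Af p * g1 = f - S p f" unfolding g1_def by (rule dd_char)
  have H3: "Af q * g2 = g1 - S q g1" unfolding g2_def by (rule dd_char)
  have H4: "Af p * g3 = g2 - S p g2" unfolding g3_def by (rule dd_char)
  have "S p (Af q * g2) = S p (g1 - S q g1)" using H3 by simp
  then have H5: "a3 * S p g2 = g1 - S p (S q g1)"
    using assms(1) dd_sym[of p f] unfolding g1_def[symmetric] by (simp only: S_mult S_diff)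
  have "S q (Af p * g1) = S q (f - S p f)" using H1 by simp
  then have H6: "a3 * S q g1 = S q f - S q (S p f)"
    using assms(2) by (simp only: S_mult S_diff)
  have "S p (a3 * S q g1) = S p (S q f - S q (S p f))" using H6 by simp
  then have H7: "Af q * S p (S q g1) = S p (S q f) - S p (S q (S p f))"
    using assms(3) by (simp only: S_mult S_diff)
  show ?thesis
    using braid_alg[OF assms(4) H1 H3 H4 H5 H6 H7] unfolding g3_def g2_def g1_def .
qed

lemma braid: "dd i (dd (Suc i) (dd i f)) = dd (Suc i) (dd i (dd (Suc i) f))"
proof -
  let ?a3 = "Var i - Var (Suc (Suc i))"
  have h1: "Af i * (Af i * Af (Suc i) * ?a3 * dd i (dd (Suc i) (dd i f))) =
         Af i * (f - S i f - S (Suc i) f + S (Suc i) (S i f) + S i (S (Suc i) f) - S i (S (Suc i) (S i f)))"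
    by (rule braid_half) (simp_all add: S_diff S_Var s_apply)
  have h2: "Af (Suc i) * (Af (Suc i) * Af i * ?a3 * dd (Suc i) (dd i (dd (Suc i) f))) =
         Af (Suc i) * (f - S (Suc i) f - S i f + S i (S (Suc i) f) + S (Suc i) (S i f) - S (Suc i) (S i (S (Suc i) f)))"
    by (rule braid_half) (simp_all add: S_diff S_Var s_apply)
  have sts: "s i \<circ> (s (Suc i) \<circ> s i) = s (Suc i) \<circ> (s i \<circ> s (Suc i))"
    by (auto simp: fun_eq_iff s_apply)
  have E: "S i (S (Suc i) (S i f)) = S (Suc i) (S i (S (Suc i) f))"
    using sts by (simp add: perm_comp bij_comp)
  have nz: "Af i \<noteq> 0" "Af (Suc i) \<noteq> 0" "?a3 \<noteq> 0" using adiff_nz Var_inj by auto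
  have e1: "Af i * Af (Suc i) * ?a3 * dd i (dd (Suc i) (dd i f)) =
         f - S i f - S (Suc i) f + S (Suc i) (S i f) + S i (S (Suc i) f) - S i (S (Suc i) (S i f))"
    using h1 nz(1) by (metis mult_left_cancel)
  have e2: "Af (Suc i) * Af i * ?a3 * dd (Suc i) (dd i (dd (Suc i) f)) =
         f - S (Suc i) f - S i f + S i (S (Suc i) f) + S (Suc i) (S i f) - S (Suc i) (S i (S (Suc i) f))"
    using h2 nz(2) by (metis mult_left_cancel)
  have "Af i * Af (Suc i) * ?a3 * dd i (dd (Suc i) (dd i f)) = Af i * Af (Suc i) * ?a3 * dd (Suc i) (dd i (dd (Suc i) f))"
  proof -
    have "Af i * Af (Suc i) * ?a3 * dd i (dd (Suc i) (dd i f)) =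
         f - S i f - S (Suc i) f + S (Suc i) (S i f) + S i (S (Suc i) f) - S i (S (Suc i) (S i f))" by (rule e1)
    also have "\<dots> = f - S (Suc i) f - S i f + S i (S (Suc i) f) + S (Suc i) (S i f) - S (Suc i) (S i (S (Suc i) f))"
      unfolding E by (simp add: algebra_simps)
    also have "\<dots> = Af (Suc i) * Af i * ?a3 * dd (Suc i) (dd i (dd (Suc i) f))" by (rule e2[symmetric])
    also have "\<dots> = Af i * Af (Suc i) * ?a3 * dd (Suc i) (dd i (dd (Suc i) f))" by (simp only: ac_simps)
    finally show ?thesis .
  qed
  moreover have "Af i * Af (Suc i) * ?a3 \<noteq> 0" using nz by simp
  ultimately show ?thesis by simp
qed



definition oset :: "nat set \<Rightarrow> spoly" where "oset B = (\<lambda>C. if C = B then 1 else 0)"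
definition scale :: "mpoly \<Rightarrow> spoly \<Rightarrow> spoly" where "scale c u = (\<lambda>C. c * u C)"

lemma smult_inf: "infinite C \<Longrightarrow> smult u v C = 0"
  by (simp add: smult_def)

lemma sgn_pair_empty [simp]: "sgn_pair {} B = 1"
  by (simp add: sgn_pair_def)

lemma sum_Pow_single:
  assumes "finite C"
  shows "(\<Sum>A\<in>Pow C. (if A = X then g A else 0)) = (if X \<subseteq> C then g X else (0::'a::comm_monoid_add))"
  using assms by (simp add: sum.delta)

lemma smult_sconst: "finite C \<Longrightarrow> smult (sconst c) u C = c * u C"
proof -
  assume f: "finite C"
  have "smult (sconst c) u C = (\<Sum>A\<in>Pow C. (if A = {} then c * u C else 0))"
    unfolding smult_def sconst_def by (rule sum.cong) auto
  also have "\<dots> = c * u C" using f by (simp add: sum.delta)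
  finally show ?thesis .
qed

lemma smult_sadd1: "smult (sadd u u') v = sadd (smult u v) (smult u' v)"
  by (simp add: smult_def sadd_def fun_eq_iff algebra_simps sum.distrib)

lemma smult_sadd2: "smult u (sadd v v') = sadd (smult u v) (smult u v')"
  by (simp add: smult_def sadd_def fun_eq_iff algebra_simps sum.distrib)

lemma smult_scale1: "smult (scale c u) v = scale c (smult u v)"
  by (simp add: smult_def scale_def fun_eq_iff algebra_simps sum_distrib_left)

lemma smult_scale2: "smult u (scale c v) = scale c (smult u v)"
  by (simp add: smult_def scale_def fun_eq_iff algebra_simps sum_distrib_left)

lemma sgn_pair_small: "(\<forall>b\<in>B. j < b) \<Longrightarrow> sgn_pair {j} B = 1"
proof -
  assume "\<forall>b\<in>B. j < b"
  then have "{(a, b). a \<in> {j} \<and> b \<in> B \<and> b < a} = {}" by auto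
  then show ?thesis unfolding sgn_pair_def by (metis card.empty power_0)
qed

lemma smult_omega_gen: "finite C \<Longrightarrow> smult (omega j) v C = (if j \<in> C then sgn_pair {j} (C - {j}) * v (C - {j}) else 0)"
proof -
  assume f: "finite C"
  have "smult (omega j) v C = (\<Sum>A\<in>Pow C. (if A = {j} then sgn_pair {j} (C - {j}) * v (C - {j}) else 0))"
    unfolding smult_def omega_def by (rule sum.cong) auto
  also have "\<dots> = (if j \<in> C then sgn_pair {j} (C - {j}) * v (C - {j}) else 0)" using f by (simp add: sum.delta)
  finally show ?thesis .
qed

lemma smult_omega_oset: "finite B \<Longrightarrow> (\<forall>b\<in>B. j < b) \<Longrightarrow> smult (omega j) (oset B) = oset (insert j B)"
proof (rule ext)
  fix C assume fB: "finite B" and lt: "\<forall>b\<in>B. j < b"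
  show "smult (omega j) (oset B) C = oset (insert j B) C"
  proof (cases "finite C")
    case False
    then have "C \<noteq> insert j B" using fB by auto
    then show ?thesis using False by (simp add: smult_inf oset_def)
  next
    case True
    have jB: "j \<notin> B" using lt by auto
    have "C - {j} = B \<and> j \<in> C \<longleftrightarrow> C = insert j B" using jB by auto
    then show ?thesis using True
      by (auto simp: smult_omega_gen oset_def sgn_pair_small[OF lt])
  qed
qed

lemma smult_omega_oset_in: "j \<in> B \<Longrightarrow> smult (omega j) (oset B) = (\<lambda>C. 0)"
proof (rule ext)
  fix C assume "j \<in> B"
  show "smult (omega j) (oset B) C = 0"
    by (cases "finite C") (auto simp: smult_inf smult_omega_gen oset_def \<open>j \<in> B\<close>)
qed

lemma sadd_zero: "sadd u (\<lambda>C. 0) = u" by (simp add: sadd_def)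
lemma scale_zero: "scale c (\<lambda>C. 0) = (\<lambda>C. 0)" by (simp add: scale_def)

lemma smult_sconst_omega: "smult (sconst c) (omega j) = scale c (omega j)"
proof (rule ext)
  fix C show "smult (sconst c) (omega j) C = scale c (omega j) C"
    by (cases "finite C") (auto simp: smult_inf smult_sconst scale_def omega_def)
qed

definition Prod :: "nat \<Rightarrow> nat list \<Rightarrow> spoly" where
  "Prod i L = foldr (\<lambda>j acc. smult (s_omega i j) acc) L (sconst 1)"

lemma Prod_formula:
  "sorted_wrt (<) L \<Longrightarrow> Prod i L =
     (if i \<in> set L \<and> Suc i \<notin> set L
      then sadd (oset (set L)) (scale (Var i - Var (Suc i)) (oset (insert (Suc i) (set L - {i}))))
      else oset (set L))"
proof (induction L)
  case Nil
  then show ?case by (simp add: Prod_def sconst_def oset_def)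
next
  case (Cons a L)
  have sL: "sorted_wrt (<) L" and lt: "\<forall>b\<in>set L. a < b" using Cons.prems by auto
  have PC: "Prod i (a # L) = smult (s_omega i a) (Prod i L)" by (simp add: Prod_def)
  show ?case
  proof (cases "a = i")
    case ai_ne: False
    then have so: "s_omega i a = omega a" by (simp add: s_omega_def)
    show ?thesis
    proof (cases "i \<in> set L \<and> Suc i \<notin> set L")
      case True
      have ai: "a < i" using lt True by auto
      have lt2: "\<forall>b\<in>insert (Suc i) (set L - {i}). a < b" using lt ai by auto
      have e: "insert a (insert (Suc i) (set L - {i})) = insert (Suc i) (insert a (set L) - {i})"
        using ai_ne by auto
      show ?thesis using True ai ai_ne
        by (simp add: PC Cons.IH[OF sL] so smult_sadd2 smult_scale2 smult_omega_oset[OF _ lt] smult_omega_oset[OF _ lt2] e)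
    next
      case nc: False
      have "\<not> (i \<in> set (a # L) \<and> Suc i \<notin> set (a # L))" using nc ai_ne by auto
      moreover have PL: "Prod i L = oset (set L)" using Cons.IH[OF sL] nc by simp
      ultimately show ?thesis using ai_ne
        by (auto simp add: PC PL so smult_omega_oset[OF _ lt])
    qed
  next
    case True
    have iL: "i \<notin> set L" using lt True by auto
    have so: "s_omega i i = sadd (omega i) (scale (Var i - Var (Suc i)) (omega (Suc i)))"
      using True by (simp add: s_omega_def smult_sconst_omega)
    have PL: "Prod i L = oset (set L)" using Cons.IH[OF sL] iL by simp
    have lti: "\<forall>b\<in>set L. i < b" using lt True by simp
    show ?thesis
    proof (cases "Suc i \<in> set L")
      case True
      then show ?thesis unfolding \<open>a = i\<close>
        by (simp add: PC[unfolded \<open>a = i\<close>] PL so smult_sadd1 smult_scale1 smult_omega_oset[OF _ lti] smult_omega_oset_in scale_zero sadd_zero)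
    next
      case False
      have lts: "\<forall>b\<in>set L. Suc i < b" using lti False by (metis Suc_lessI)
      have e: "set L - {i} = set L" using iL by auto
      show ?thesis using False unfolding \<open>a = i\<close>
        by (simp add: PC[unfolded \<open>a = i\<close>] PL so smult_sadd1 smult_scale1 smult_omega_oset[OF _ lti] smult_omega_oset[OF _ lts] e)
    qed
  qed
qed



lemma s_act_formula:
  assumes i1: "1 \<le> i" and iN: "Suc i \<le> n"
  shows "s_act n i v C = (if C \<subseteq> {1..n} then S i (v C) +
     (if i \<notin> C \<and> Suc i \<in> C then (Var i - Var (Suc i)) * S i (v (insert i (C - {Suc i}))) else 0) else 0)"
proof (cases "finite C")
  case False
  then have "\<not> C \<subseteq> {1..n}" using finite_subset by blast
  then show ?thesis using False unfolding s_act_def by (simp add: smult_inf)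
next
  case fC: True
  let ?X = "insert i (C - {Suc i})"
  have Pexp: "Prod i (sorted_list_of_set B) C = oset B C + (if i \<in> B \<and> Suc i \<notin> B then (Var i - Var (Suc i)) * oset (insert (Suc i) (B - {i})) C else 0)"
    if "B \<subseteq> {1..n}" for B
  proof -
    have fB: "finite B" using that finite_subset by blast
    show ?thesis using Prod_formula[of "sorted_list_of_set B" i] fB
      by (simp add: sadd_def scale_def)
  qed
  have "s_act n i v C = (\<Sum>B\<in>Pow {1..n}. S i (v B) * Prod i (sorted_list_of_set B) C)"
    unfolding s_act_def Prod_def[symmetric] using fC by (simp add: smult_sconst)
  also have "\<dots> = (\<Sum>B\<in>Pow {1..n}. (if B = C then S i (v C) else 0)) +
      (\<Sum>B\<in>Pow {1..n}. (if B = ?X then (if i \<notin> C \<and> Suc i \<in> C then (Var i - Var (Suc i)) * S i (v ?X) else 0) else 0))"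
    unfolding sum.distrib[symmetric]
  proof (rule sum.cong)
    fix B assume "B \<in> Pow {1..n}"
    then have B: "B \<subseteq> {1..n}" by simp
    have eq: "(i \<in> B \<and> Suc i \<notin> B \<and> insert (Suc i) (B - {i}) = C) \<longleftrightarrow> (B = ?X \<and> i \<notin> C \<and> Suc i \<in> C)"
      by auto
    show "S i (v B) * Prod i (sorted_list_of_set B) C = (if B = C then S i (v C) else 0) +
      (if B = ?X then (if i \<notin> C \<and> Suc i \<in> C then (Var i - Var (Suc i)) * S i (v ?X) else 0) else 0)"
      unfolding Pexp[OF B] using eq by (auto simp: oset_def algebra_simps)
  qed simp
  also have "\<dots> = (if C \<subseteq> {1..n} then S i (v C) else 0) +
      (if ?X \<subseteq> {1..n} then (if i \<notin> C \<and> Suc i \<in> C then (Var i - Var (Suc i)) * S i (v ?X) else 0) else 0)"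
    by (simp add: sum.delta)
  also have "\<dots> = (if C \<subseteq> {1..n} then S i (v C) +
     (if i \<notin> C \<and> Suc i \<in> C then (Var i - Var (Suc i)) * S i (v ?X) else 0) else 0)"
  proof -
    have "i \<notin> C \<and> Suc i \<in> C \<Longrightarrow> (?X \<subseteq> {1..n} \<longleftrightarrow> C \<subseteq> {1..n})" using i1 iN by auto
    then show ?thesis by auto
  qed
  finally show ?thesis .
qed



definition LR :: "nat \<Rightarrow> spoly \<Rightarrow> bool" where
  "LR n f \<longleftrightarrow> (\<forall>i C. 1 \<le> i \<and> i < n \<and> C \<subseteq> {1..n} \<longrightarrow>
     (\<not> (i \<notin> C \<and> Suc i \<in> C) \<longrightarrow> S i (f C) = f C) \<and>
     (i \<notin> C \<and> Suc i \<in> C \<longrightarrow> f (insert i (C - {Suc i})) = dd i (f C)))"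

lemma in_Lambda_iff_LR:
  assumes z: "\<forall>A. \<not> A \<subseteq> {1..n} \<longrightarrow> f A = 0"
  shows "in_Lambda n f \<longleftrightarrow> LR n f"
proof
  assume L: "in_Lambda n f"
  show "LR n f" unfolding LR_def
  proof (intro allI impI conjI)
    fix i C assume h: "1 \<le> i \<and> i < n \<and> C \<subseteq> {1..n}"
    then have act: "s_act n i f D = f D" for D using L unfolding in_Lambda_def by metis
    have fm: "s_act n i f D = (if D \<subseteq> {1..n} then S i (f D) +
     (if i \<notin> D \<and> Suc i \<in> D then (Var i - Var (Suc i)) * S i (f (insert i (D - {Suc i}))) else 0) else 0)" for D
      using h by (intro s_act_formula) auto
    show "S i (f C) = f C" if "\<not> (i \<notin> C \<and> Suc i \<in> C)"
      using act[of C] fm[of C] that h by (auto split: if_splits)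
    assume c: "i \<notin> C \<and> Suc i \<in> C"
    let ?X = "insert i (C - {Suc i})"
    have X: "?X \<subseteq> {1..n}" "\<not> (i \<notin> ?X \<and> Suc i \<in> ?X)" using h c by auto
    have SX: "S i (f ?X) = f ?X" using act[of ?X] fm[of ?X] X by simp
    have "f C = S i (f C) + (Var i - Var (Suc i)) * f ?X" using act[of C] fm[of C] h c SX by simp
    then have "(Var i - Var (Suc i)) * f ?X = f C - S i (f C)" by (simp add: algebra_simps)
    then show "f ?X = dd i (f C)" by (metis dd_unique)
  qed
next
  assume R: "LR n f"
  show "in_Lambda n f" unfolding in_Lambda_def
  proof (intro allI impI ext)
    fix i C assume h: "1 \<le> i \<and> i < n"
    have fm: "s_act n i f C = (if C \<subseteq> {1..n} then S i (f C) +
     (if i \<notin> C \<and> Suc i \<in> C then (Var i - Var (Suc i)) * S i (f (insert i (C - {Suc i}))) else 0) else 0)"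
      using h by (intro s_act_formula) auto
    show "s_act n i f C = f C"
    proof (cases "C \<subseteq> {1..n}")
      case False then show ?thesis using fm z by simp
    next
      case True
      show ?thesis
      proof (cases "i \<notin> C \<and> Suc i \<in> C")
        case False
        then have "S i (f C) = f C" using R h True unfolding LR_def by blast
        then show ?thesis using fm True False by auto
      next
        case c: True
        have e: "f (insert i (C - {Suc i})) = dd i (f C)" using R h True c unfolding LR_def by blast
        have "s_act n i f C = S i (f C) + (Var i - Var (Suc i)) * dd i (f C)"
          using fm True c e dd_sym by simp
        then show ?thesis by (simp add: dd_char)
      qed
    qed
  qed
qed



definition Inv :: "nat \<Rightarrow> (nat \<Rightarrow> nat) \<Rightarrow> (nat \<times> nat) set" where
  "Inv n w = {(i, j). 1 \<le> i \<and> i < j \<and> j \<le> n \<and> w j < w i}"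

lemma inv_count_Inv: "inv_count n w = card (Inv n w)" by (simp add: inv_count_def Inv_def)

lemma finite_Inv: "finite (Inv n w)"
  by (rule finite_subset[of _ "{1..n} \<times> {1..n}"]) (auto simp: Inv_def)

lemma s_order: "x \<noteq> y \<Longrightarrow> \<not> (x = i \<and> y = Suc i) \<Longrightarrow> \<not> (y = i \<and> x = Suc i) \<Longrightarrow> (s i y < s i x \<longleftrightarrow> y < x)"
  by (auto simp: s_apply)

lemma s_permutes: "1 \<le> i \<Longrightarrow> i < n \<Longrightarrow> s i permutes {1..n}"
  unfolding s_def by (rule permutes_swap_id) auto

lemma inv_step:
  assumes w: "w permutes {1..n}" and i: "1 \<le> i" "i < n"
    and p: "p \<in> {1..n}" "w p = i" and q: "q \<in> {1..n}" "w q = Suc i"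
  shows "p < q \<Longrightarrow> inv_count n (s i \<circ> w) = Suc (inv_count n w)"
    and "q < p \<Longrightarrow> inv_count n w = Suc (inv_count n (s i \<circ> w))"
proof -
  have inj: "w a = w b \<Longrightarrow> a = b" for a b using permutes_inj[OF w] by (meson injD)
  have key: "(a, b) \<in> Inv n (s i \<circ> w) \<longleftrightarrow> (a, b) \<in> Inv n w"
    if "(a, b) \<noteq> (p, q)" "(a, b) \<noteq> (q, p)" for a b
  proof -
    have "a < b \<Longrightarrow> w a \<noteq> w b" using inj by force
    moreover have "\<not> (w a = i \<and> w b = Suc i)" using that p q inj by metis
    moreover have "\<not> (w b = i \<and> w a = Suc i)" using that p q inj by metis
    ultimately show ?thesis unfolding Inv_def using s_order[of "w a" "w b" i] by auto
  qed
  show "p < q \<Longrightarrow> inv_count n (s i \<circ> w) = Suc (inv_count n w)"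
  proof -
    assume pq: "p < q"
    have "Inv n (s i \<circ> w) = insert (p, q) (Inv n w)"
    proof (rule set_eqI)
      fix x :: "nat \<times> nat"
      obtain a b where x: "x = (a, b)" by fastforce
      have "(p, q) \<in> Inv n (s i \<circ> w)" using pq p q by (simp add: Inv_def s_apply)
      moreover have "(q, p) \<notin> Inv n (s i \<circ> w)" "(q, p) \<notin> Inv n w" using pq by (auto simp: Inv_def)
      ultimately show "x \<in> Inv n (s i \<circ> w) \<longleftrightarrow> x \<in> insert (p, q) (Inv n w)"
        unfolding x using key[of a b] by auto
    qed
    moreover have "(p, q) \<notin> Inv n w" using p q by (auto simp: Inv_def)
    ultimately show ?thesis by (simp add: inv_count_Inv finite_Inv)
  qed
  show "q < p \<Longrightarrow> inv_count n w = Suc (inv_count n (s i \<circ> w))"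
  proof -
    assume pq: "q < p"
    have "Inv n w = insert (q, p) (Inv n (s i \<circ> w))"
    proof (rule set_eqI)
      fix x :: "nat \<times> nat"
      obtain a b where x: "x = (a, b)" by fastforce
      have "(q, p) \<in> Inv n w" using pq p q by (simp add: Inv_def)
      moreover have "(p, q) \<notin> Inv n (s i \<circ> w)" "(p, q) \<notin> Inv n w" using pq by (auto simp: Inv_def)
      ultimately show "x \<in> Inv n w \<longleftrightarrow> x \<in> insert (q, p) (Inv n (s i \<circ> w))"
        unfolding x using key[of a b] by auto
    qed
    moreover have "(q, p) \<notin> Inv n (s i \<circ> w)" using p q by (auto simp: Inv_def s_apply)
    ultimately show ?thesis by (simp add: inv_count_Inv finite_Inv)
  qed
qed

lemma preimage_in:
  assumes w: "w permutes {1..n}" and x: "x \<in> {1..n}"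
  obtains p where "p \<in> {1..n}" "w p = x"
  using permutes_image[OF w] x by (metis imageE)

lemma inv_step_le:
  assumes w: "w permutes {1..n}" and i: "1 \<le> i" "i < n"
  shows "inv_count n (s i \<circ> w) \<le> Suc (inv_count n w)"
proof -
  obtain p where p: "p \<in> {1..n}" "w p = i" using preimage_in[OF w, of i] i by auto
  obtain q where q: "q \<in> {1..n}" "w q = Suc i" using preimage_in[OF w, of "Suc i"] i by auto
  have "p \<noteq> q" using p q by auto
  then show ?thesis using inv_step[OF w i p q] by (cases "p < q") auto
qed

lemma word_props:
  assumes "\<forall>i\<in>set is. 1 \<le> i \<and> i < n"
  shows "foldr (\<lambda>i acc. s i \<circ> acc) is id permutes {1..n} \<and> inv_count n (foldr (\<lambda>i acc. s i \<circ> acc) is id) \<le> length is"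
  using assms
proof (induction "is")
  case Nil
  have "inv_count n id = card ({}::(nat\<times>nat) set)" unfolding inv_count_def by (rule arg_cong[where f=card]) auto
  then have "inv_count n id = 0" by simp
  then show ?case by (metis foldr_Nil id_apply list.size(3) order_refl permutes_id)
next
  case (Cons i r)
  let ?W = "foldr (\<lambda>i acc. s i \<circ> acc) r id"
  have r: "\<forall>i\<in>set r. 1 \<le> i \<and> i < n" using Cons.prems by simp
  have W: "?W permutes {1..n}" "inv_count n ?W \<le> length r" using Cons.IH[OF r] by blast+
  have i: "1 \<le> i" "i < n" using Cons.prems by auto
  have "s i \<circ> ?W permutes {1..n}" using permutes_compose[OF W(1) s_permutes[OF i]] .
  moreover have "inv_count n (s i \<circ> ?W) \<le> Suc (length r)" using inv_step_le[OF W(1) i] W(2) by simp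
  ultimately show ?case by (metis foldr_Cons o_apply length_Cons)
qed



lemma smo_unique:
  fixes g h :: "nat \<Rightarrow> nat"
  assumes g: "strict_mono_on {a..b} g" and h: "strict_mono_on {a..b} h"
    and im: "g ` {a..b} = h ` {a..b}" and x: "x \<in> {a..b}"
  shows "g x = h x"
proof -
  have cnt: "card {y \<in> f ` {a..b}. y < f x} = x - a" if f: "strict_mono_on {a..b} f" for f :: "nat \<Rightarrow> nat"
  proof -
    have "{y \<in> f ` {a..b}. y < f x} = f ` {a..<x}"
    proof
      show "{y \<in> f ` {a..b}. y < f x} \<subseteq> f ` {a..<x}"
        using strict_mono_on_less[OF f] x by fastforce
      show "f ` {a..<x} \<subseteq> {y \<in> f ` {a..b}. y < f x}"
        using strict_mono_on_less[OF f] x by fastforce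
    qed
    moreover have "inj_on f {a..<x}"
      using strict_mono_on_imp_inj_on[OF f] x by (auto intro: inj_on_subset)
    ultimately show ?thesis by (simp add: card_image)
  qed
  let ?X = "g ` {a..b}"
  have cg: "card {y \<in> ?X. y < g x} = x - a" using cnt[OF g] .
  have ch: "card {y \<in> ?X. y < h x} = x - a" using cnt[OF h] im by simp
  have fin: "finite {y \<in> ?X. y < z}" for z by simp
  show ?thesis
  proof (rule ccontr)
    assume ne: "g x \<noteq> h x"
    show False
    proof (cases "g x < h x")
      case True
      have "{y \<in> ?X. y < g x} \<subset> {y \<in> ?X. y < h x}" using True x by auto
      then have "card {y \<in> ?X. y < g x} < card {y \<in> ?X. y < h x}" by (rule psubset_card_mono[OF fin])
      then show False using cg ch by simp
    next
      case False
      then have lt: "h x < g x" using ne by simp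
      have "h x \<in> ?X" using im x by auto
      then have "{y \<in> ?X. y < h x} \<subset> {y \<in> ?X. y < g x}" using lt by auto
      then have "card {y \<in> ?X. y < h x} < card {y \<in> ?X. y < g x}" by (rule psubset_card_mono[OF fin])
      then show False using cg ch by simp
    qed
  qed
qed

lemma enum_mono: "strict_mono_on {Suc c..c + card X} (\<lambda>x. sorted_list_of_set X ! (x - c - 1))"
proof (rule strict_mono_onI)
  fix x y assume "x \<in> {Suc c..c + card X}" "y \<in> {Suc c..c + card X}" "x < y"
  then have "x - c - 1 < y - c - 1" "y - c - 1 < length (sorted_list_of_set X)"
    by (auto simp: length_sorted_list_of_set)
  then show "sorted_list_of_set X ! (x - c - 1) < sorted_list_of_set X ! (y - c - 1)"
    using sorted_wrt_nth_less[OF strict_sorted_list_of_set] by blast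
qed

lemma enum_image: "finite X \<Longrightarrow> (\<lambda>x. sorted_list_of_set X ! (x - c - 1)) ` {Suc c..c + card X} = X"
proof
  assume fX: "finite X"
  let ?L = "sorted_list_of_set X"
  have len: "length ?L = card X" by (simp add: length_sorted_list_of_set)
  show "(\<lambda>x. ?L ! (x - c - 1)) ` {Suc c..c + card X} \<subseteq> X"
  proof
    fix y assume "y \<in> (\<lambda>x. ?L ! (x - c - 1)) ` {Suc c..c + card X}"
    then obtain x where x: "x \<in> {Suc c..c + card X}" "y = ?L ! (x - c - 1)" by auto
    then have "x - c - 1 < length ?L" using len by auto
    then have "y \<in> set ?L" using x nth_mem by simp
    then show "y \<in> X" using fX by simp
  qed
  show "X \<subseteq> (\<lambda>x. ?L ! (x - c - 1)) ` {Suc c..c + card X}"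
  proof
    fix y assume "y \<in> X"
    then have "y \<in> set ?L" using fX by simp
    then obtain t where t: "t < length ?L" "?L ! t = y" by (auto simp: in_set_conv_nth)
    then show "y \<in> (\<lambda>x. ?L ! (x - c - 1)) ` {Suc c..c + card X}"
      using len by (intro image_eqI[of _ _ "t + c + 1"]) auto
  qed
qed



lemma smo_cong: "strict_mono_on X g \<Longrightarrow> (\<And>x. x \<in> X \<Longrightarrow> f x = g x) \<Longrightarrow> strict_mono_on X f"
  by (auto simp: strict_mono_on_def)

context
  fixes n :: nat and A :: "nat set"
  assumes An: "A \<subseteq> {1..n}"
begin

lemma fA: "finite A" using An finite_subset by blast
lemma kn: "card A \<le> n" using card_mono[OF _ An] by simp
lemma cZ: "card ({1..n} - A) = n - card A" using An fA by (simp add: card_Diff_subset)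

lemma sig_b1: "x \<in> {1..n - card A} \<Longrightarrow> sigma n A x = sorted_list_of_set ({1..n} - A) ! (x - 0 - 1)"
  by (simp add: sigma_def)
lemma sig_b2: "x \<in> {Suc (n - card A)..n} \<Longrightarrow> sigma n A x = sorted_list_of_set A ! (x - (n - card A) - 1)"
  by (simp add: sigma_def)
lemma sig_out: "x \<notin> {1..n} \<Longrightarrow> sigma n A x = x"
  by (auto simp: sigma_def)

lemma blk1: "{1..n - card A} = {Suc 0..0 + card ({1..n} - A)}" using cZ by simp
lemma blk2: "{Suc (n - card A)..n} = {Suc (n - card A)..(n - card A) + card A}" using kn by simp

lemma sig_mono1: "strict_mono_on {1..n - card A} (sigma n A)"
  using enum_mono[of 0 "{1..n} - A"] unfolding blk1[symmetric] by (rule smo_cong) (simp add: sig_b1)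

lemma sig_mono2: "strict_mono_on {Suc (n - card A)..n} (sigma n A)"
  using enum_mono[of "n - card A" A] unfolding blk2[symmetric] by (rule smo_cong) (simp add: sig_b2)

lemma sig_img1: "sigma n A ` {1..n - card A} = {1..n} - A"
proof -
  have "sigma n A ` {1..n - card A} = (\<lambda>x. sorted_list_of_set ({1..n} - A) ! (x - 0 - 1)) ` {1..n - card A}"
    by (rule image_cong) (simp_all add: sig_b1)
  also have "\<dots> = {1..n} - A" unfolding blk1 by (rule enum_image) simp
  finally show ?thesis .
qed

lemma sig_img2: "sigma n A ` {Suc (n - card A)..n} = A"
proof -
  have "sigma n A ` {Suc (n - card A)..n} = (\<lambda>x. sorted_list_of_set A ! (x - (n - card A) - 1)) ` {Suc (n - card A)..n}"
    by (rule image_cong) (simp_all add: sig_b2)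
  also have "\<dots> = A" unfolding blk2 by (rule enum_image[OF fA])
  finally show ?thesis .
qed

lemma blocks: "{1..n} = {1..n - card A} \<union> {Suc (n - card A)..n}" using kn by auto

lemma sig_perm: "sigma n A permutes {1..n}"
proof (rule bij_imp_permutes)
  have im: "sigma n A ` {1..n} = {1..n}"
    using sig_img1 sig_img2 An by (subst blocks) (auto simp: image_Un)
  have "inj_on (sigma n A) {1..n}" by (rule eq_card_imp_inj_on) (simp, simp only: im)
  then show "bij_betw (sigma n A) {1..n} {1..n}" using im by (simp add: bij_betw_def)
  show "x \<notin> {1..n} \<Longrightarrow> sigma n A x = x" for x by (rule sig_out)
qed

lemma grass_unique:
  assumes w: "w permutes {1..n}" and m1: "strict_mono_on {1..n - card A} w"
    and m2: "strict_mono_on {Suc (n - card A)..n} w" and i2: "w ` {Suc (n - card A)..n} = A"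
  shows "w = sigma n A"
proof
  fix x
  have i1: "w ` {1..n - card A} = {1..n} - A"
  proof -
    have "{1..n - card A} = {1..n} - {Suc (n - card A)..n}" by auto
    then have "w ` {1..n - card A} = w ` {1..n} - w ` {Suc (n - card A)..n}"
      using permutes_inj[OF w] by (simp add: image_set_diff)
    then show ?thesis using permutes_image[OF w] i2 by simp
  qed
  show "w x = sigma n A x"
  proof (cases "x \<in> {1..n - card A}")
    case True
    show ?thesis by (rule smo_unique[OF m1 sig_mono1 _ True]) (simp only: i1 sig_img1)
  next
    case F1: False
    show ?thesis
    proof (cases "x \<in> {Suc (n - card A)..n}")
      case True
      show ?thesis by (rule smo_unique[OF m2 sig_mono2 _ True]) (simp only: i2 sig_img2)
    next
      case False
      then have "x \<notin> {1..n}" using F1 blocks by auto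
      then show ?thesis using permutes_not_in[OF w] sig_out by simp
    qed
  qed
qed


lemma blk_mem: "x \<in> {1..n} \<Longrightarrow> (x \<in> {Suc (n - card A)..n} \<longleftrightarrow> sigma n A x \<in> A)"
proof
  assume "x \<in> {Suc (n - card A)..n}" then show "sigma n A x \<in> A" using sig_img2 by blast
next
  assume x: "x \<in> {1..n}" and "sigma n A x \<in> A"
  show "x \<in> {Suc (n - card A)..n}"
  proof (rule ccontr)
    assume "x \<notin> {Suc (n - card A)..n}"
    then have "x \<in> {1..n - card A}" using x by auto
    then have "sigma n A x \<in> {1..n} - A" using sig_img1 by blast
    then show False using \<open>sigma n A x \<in> A\<close> by simp
  qed
qed

end


lemma s_mono: "a < b \<Longrightarrow> \<not> (a = i \<and> b = Suc i) \<Longrightarrow> s i a < s i b"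
  by (auto simp: s_apply)

lemma card_tau: "k \<le> n \<Longrightarrow> card (tau n k) = k" by (simp add: tau_def)
lemma tau_sub: "tau n k \<subseteq> {1..n}" by (auto simp: tau_def)

lemma sigma_tau: assumes "k \<le> n" shows "sigma n (tau n k) = id"
proof -
  have e: "Suc (n - card (tau n k)) = n - k + 1" using assms by (simp add: card_tau)
  show ?thesis
    by (rule grass_unique[OF tau_sub, symmetric]) (auto simp: e tau_def strict_mono_on_id)
qed

lemma sigma_id_tau: assumes "A \<subseteq> {1..n}" "sigma n A = id" shows "A = tau n (card A)"
proof -
  have "A = sigma n A ` {Suc (n - card A)..n}" using sig_img2[OF assms(1)] by simp
  also have "\<dots> = tau n (card A)" using assms(2) kn[OF assms(1)] by (auto simp: tau_def)
  finally show ?thesis .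
qed

definition Ai :: "nat set \<Rightarrow> nat \<Rightarrow> nat set" where "Ai A i = insert (Suc i) (A - {i})"

lemma Ai_sub: "A \<subseteq> {1..n} \<Longrightarrow> 1 \<le> i \<Longrightarrow> i < n \<Longrightarrow> Ai A i \<subseteq> {1..n}"
  by (auto simp: Ai_def)

lemma Ai_card: "A \<subseteq> {1..n} \<Longrightarrow> i \<in> A \<Longrightarrow> Suc i \<notin> A \<Longrightarrow> card (Ai A i) = card A"
proof -
  assume "A \<subseteq> {1..n}" "i \<in> A" "Suc i \<notin> A"
  then have "finite A" using finite_subset by blast
  moreover have "card A > 0" using \<open>finite A\<close> \<open>i \<in> A\<close> by (auto simp: card_gt_0_iff)
  ultimately show ?thesis using \<open>i \<in> A\<close> \<open>Suc i \<notin> A\<close> by (simp add: Ai_def card.insert_remove)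
qed

lemma s_sigma:
  assumes An: "A \<subseteq> {1..n}" and i: "1 \<le> i" "i < n" and d: "i \<in> A" "Suc i \<notin> A"
  shows "s i \<circ> sigma n A = sigma n (Ai A i)"
proof -
  let ?w = "s i \<circ> sigma n A"
  have c: "card (Ai A i) = card A" using Ai_card[OF An d] .
  show ?thesis
  proof (rule grass_unique[OF Ai_sub[OF An i]])
    show "?w permutes {1..n}" by (rule permutes_compose[OF sig_perm[OF An] s_permutes[OF i]])
    show "strict_mono_on {1..n - card (Ai A i)} ?w" unfolding c
    proof (rule strict_mono_onI)
      fix x y assume xy: "x \<in> {1..n - card A}" "y \<in> {1..n - card A}" "x < y"
      have "sigma n A x < sigma n A y" using strict_mono_onD[OF sig_mono1[OF An] xy] .
      moreover have "sigma n A x \<in> {1..n} - A" using imageI[OF xy(1), of "sigma n A"] sig_img1[OF An] by simp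
      then have "sigma n A x \<noteq> i" using d(1) by auto
      ultimately have "s i (sigma n A x) < s i (sigma n A y)" by (intro s_mono) simp_all
      then show "?w x < ?w y" by simp
    qed
    show "strict_mono_on {Suc (n - card (Ai A i))..n} ?w" unfolding c
    proof (rule strict_mono_onI)
      fix x y assume xy: "x \<in> {Suc (n - card A)..n}" "y \<in> {Suc (n - card A)..n}" "x < y"
      have "sigma n A x < sigma n A y" using strict_mono_onD[OF sig_mono2[OF An] xy] .
      moreover have "sigma n A y \<in> A" using imageI[OF xy(2), of "sigma n A"] sig_img2[OF An] by simp
      then have "sigma n A y \<noteq> Suc i" using d(2) by auto
      ultimately have "s i (sigma n A x) < s i (sigma n A y)" by (intro s_mono) simp_all
      then show "?w x < ?w y" by simp
    qed
    have "?w ` {Suc (n - card A)..n} = s i ` (sigma n A ` {Suc (n - card A)..n})" by (rule image_comp[symmetric])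
    also have "\<dots> = s i ` A" by (simp only: sig_img2[OF An])
    also have "\<dots> = Ai A i"
    proof
      show "s i ` A \<subseteq> Ai A i" using d by (auto simp: Ai_def s_apply)
      show "Ai A i \<subseteq> s i ` A"
      proof
        fix x assume "x \<in> Ai A i"
        then have "x = Suc i \<or> (x \<in> A \<and> x \<noteq> i)" by (auto simp: Ai_def)
        then show "x \<in> s i ` A"
        proof
          assume "x = Suc i" then show ?thesis using d by (intro image_eqI[of _ _ i]) (auto simp: s_apply)
        next
          assume "x \<in> A \<and> x \<noteq> i"
          moreover then have "x \<noteq> Suc i" using d by auto
          ultimately show ?thesis by (intro image_eqI[of _ _ x]) (auto simp: s_apply)
        qed
      qed
    qed
    finally show "?w ` {Suc (n - card (Ai A i))..n} = Ai A i" unfolding c .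
  qed
qed

lemma desc_inv:
  assumes An: "A \<subseteq> {1..n}" and i: "1 \<le> i" "i < n"
  shows "i \<in> A \<and> Suc i \<notin> A \<Longrightarrow> inv_count n (sigma n A) = Suc (inv_count n (sigma n (Ai A i)))"
    and "\<not> (i \<in> A \<and> Suc i \<notin> A) \<Longrightarrow> inv_count n (s i \<circ> sigma n A) = Suc (inv_count n (sigma n A))"
proof -
  have w: "sigma n A permutes {1..n}" by (rule sig_perm[OF An])
  obtain p where p: "p \<in> {1..n}" "sigma n A p = i" using preimage_in[OF w, of i] i by auto
  obtain q where q: "q \<in> {1..n}" "sigma n A q = Suc i" using preimage_in[OF w, of "Suc i"] i by auto
  have pm: "p \<in> {Suc (n - card A)..n} \<longleftrightarrow> i \<in> A" using blk_mem[OF An p(1)] p(2) by simp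
  have qm: "q \<in> {Suc (n - card A)..n} \<longleftrightarrow> Suc i \<in> A" using blk_mem[OF An q(1)] q(2) by simp
  show "i \<in> A \<and> Suc i \<notin> A \<Longrightarrow> inv_count n (sigma n A) = Suc (inv_count n (sigma n (Ai A i)))"
  proof -
    assume d: "i \<in> A \<and> Suc i \<notin> A"
    then have "q < p" using pm qm p(1) q(1) by auto
    then show ?thesis using inv_step(2)[OF w i p q] s_sigma[OF An i] d by simp
  qed
  show "\<not> (i \<in> A \<and> Suc i \<notin> A) \<Longrightarrow> inv_count n (s i \<circ> sigma n A) = Suc (inv_count n (sigma n A))"
  proof -
    assume nd: "\<not> (i \<in> A \<and> Suc i \<notin> A)"
    have "p < q"
    proof (cases "i \<in> A")
      case True
      then have "Suc i \<in> A" using nd by simp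
      then have "p \<in> {Suc (n - card A)..n}" "q \<in> {Suc (n - card A)..n}" using pm qm True by auto
      then show ?thesis using strict_mono_on_less[OF sig_mono2[OF An]] p(2) q(2) by (metis lessI)
    next
      case False
      show ?thesis
      proof (cases "Suc i \<in> A")
        case True
        then show ?thesis using pm qm False p(1) q(1) by auto
      next
        case F2: False
        then have "p \<in> {1..n - card A}" "q \<in> {1..n - card A}" using pm qm False p(1) q(1) by auto
        then show ?thesis using strict_mono_on_less[OF sig_mono1[OF An]] p(2) q(2) by (metis lessI)
      qed
    qed
    then show ?thesis using inv_step(1)[OF w i p q] by simp
  qed
qed



lemma desc_exists:
  assumes An: "A \<subseteq> {1..n}" and nt: "A \<noteq> tau n (card A)"
  shows "\<exists>j. 1 \<le> j \<and> j < n \<and> j \<in> A \<and> Suc j \<notin> A"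
proof (rule ccontr)
  assume H: "\<not> ?thesis"
  have fA: "finite A" using An finite_subset by blast
  show False
  proof (cases "A = {}")
    case True
    then show False using nt by (simp add: tau_def)
  next
    case False
    define m where "m = Min A"
    have mA: "m \<in> A" using False fA m_def by simp
    have m1: "1 \<le> m" "m \<le> n" using mA An by auto
    have up: "m + t \<le> n \<Longrightarrow> m + t \<in> A" for t
    proof (induction t)
      case 0 then show ?case using mA by simp
    next
      case (Suc t)
      then have "m + t \<in> A" by simp
      moreover have "1 \<le> m + t" "m + t < n" using m1 Suc.prems by auto
      ultimately show ?case using H by auto
    qed
    have "A = {m..n}"
    proof
      show "A \<subseteq> {m..n}" using An fA m_def by (auto intro: Min_le)
      show "{m..n} \<subseteq> A"
      proof
        fix x assume "x \<in> {m..n}"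
        then have "m + (x - m) \<le> n" "m + (x - m) = x" by auto
        then show "x \<in> A" using up by metis
      qed
    qed
    moreover then have "card A = n + 1 - m" by simp
    ultimately have "A = tau n (card A)" using m1 by (auto simp: tau_def)
    then show False using nt by simp
  qed
qed

lemma rw_first:
  assumes An: "A \<subseteq> {1..n}" and rw: "reduced_word n (sigma n A) (i # r)"
  shows "1 \<le> i \<and> i < n \<and> i \<in> A \<and> Suc i \<notin> A \<and> reduced_word n (sigma n (Ai A i)) r"
proof -
  let ?W = "foldr (\<lambda>i acc. s i \<circ> acc) r id"
  have i: "1 \<le> i" "i < n" and rr: "\<forall>j\<in>set r. 1 \<le> j \<and> j < n"
    and sw: "sigma n A = s i \<circ> ?W" and len: "Suc (length r) = inv_count n (sigma n A)"
    using rw unfolding reduced_word_def by auto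
  have W: "?W = s i \<circ> sigma n A" unfolding sw comp_assoc[symmetric] s_s by simp
  have Wle: "inv_count n ?W \<le> length r" using word_props[OF rr] by blast
  have d: "i \<in> A \<and> Suc i \<notin> A"
  proof (rule ccontr)
    assume "\<not> (i \<in> A \<and> Suc i \<notin> A)"
    then have "inv_count n ?W = Suc (inv_count n (sigma n A))" using desc_inv(2)[OF An i] W by simp
    then show False using Wle len by simp
  qed
  have "?W = sigma n (Ai A i)" using W s_sigma[OF An i] d by simp
  moreover have "inv_count n (sigma n (Ai A i)) = length r" using desc_inv(1)[OF An i d] len by simp
  ultimately show ?thesis using i d rr unfolding reduced_word_def by simp
qed

lemma rw_cons:
  assumes An: "A \<subseteq> {1..n}" and i: "1 \<le> i" "i < n" and d: "i \<in> A" "Suc i \<notin> A"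
    and rw: "reduced_word n (sigma n (Ai A i)) u"
  shows "reduced_word n (sigma n A) (i # u)"
proof -
  have e: "s i \<circ> sigma n (Ai A i) = sigma n A"
    unfolding s_sigma[OF An i d, symmetric] comp_assoc[symmetric] s_s by simp
  have len: "inv_count n (sigma n A) = Suc (inv_count n (sigma n (Ai A i)))" using desc_inv(1)[OF An i] d by simp
  have u1: "\<forall>j\<in>set u. 1 \<le> j \<and> j < n" and u2: "sigma n (Ai A i) = foldr (\<lambda>i acc. s i \<circ> acc) u id"
    and u3: "length u = inv_count n (sigma n (Ai A i))" using rw unfolding reduced_word_def by blast+
  have "foldr (\<lambda>i acc. s i \<circ> acc) (i # u) id = s i \<circ> foldr (\<lambda>i acc. s i \<circ> acc) u id" by simp
  then have "sigma n A = foldr (\<lambda>i acc. s i \<circ> acc) (i # u) id" using e u2 by simp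
  moreover have "\<forall>j\<in>set (i # u). 1 \<le> j \<and> j < n" using u1 i by simp
  moreover have "length (i # u) = inv_count n (sigma n A)" using u3 len by simp
  ultimately show ?thesis unfolding reduced_word_def by blast
qed

lemma rw_nil: "A \<subseteq> {1..n} \<Longrightarrow> reduced_word n (sigma n A) [] \<Longrightarrow> A = tau n (card A)"
  unfolding reduced_word_def by (rule sigma_id_tau) auto

lemma inv_id: "inv_count n id = 0"
proof -
  have "inv_count n id = card ({}::(nat\<times>nat) set)" unfolding inv_count_def by (rule arg_cong[where f=card]) auto
  then show ?thesis by simp
qed

lemma rw_id: "reduced_word n id is \<Longrightarrow> is = []"
  unfolding reduced_word_def using inv_id by simp

lemma rw_exists: "A \<subseteq> {1..n} \<Longrightarrow> \<exists>is. reduced_word n (sigma n A) is"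
proof (induction "inv_count n (sigma n A)" arbitrary: A rule: less_induct)
  case less
  show ?case
  proof (cases "A = tau n (card A)")
    case True
    then have "sigma n A = id" using sigma_tau[OF kn[OF less.prems]] by metis
    then have "reduced_word n (sigma n A) []" unfolding reduced_word_def using inv_id by simp
    then show ?thesis by blast
  next
    case False
    then obtain j where j: "1 \<le> j" "j < n" "j \<in> A" "Suc j \<notin> A" using desc_exists[OF less.prems] by blast
    have lt: "inv_count n (sigma n (Ai A j)) < inv_count n (sigma n A)" using desc_inv(1)[OF less.prems j(1,2)] j by simp
    obtain u where "reduced_word n (sigma n (Ai A j)) u" using less.hyps[OF lt Ai_sub[OF less.prems j(1,2)]] by blast
    then show ?thesis using rw_cons[OF less.prems j] by blast
  qed
qed



lemma Ai_desc_other: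
  assumes "i \<in> A" "Suc i \<notin> A" "j \<in> A" "Suc j \<notin> A" "i \<noteq> j"
  shows "j \<in> Ai A i" "Suc j \<notin> Ai A i" "Ai (Ai A i) j = Ai (Ai A j) i" "Suc j < i \<or> Suc i < j"
proof -
  show "j \<in> Ai A i" "Suc j \<notin> Ai A i" "Ai (Ai A i) j = Ai (Ai A j) i" using assms by (auto simp: Ai_def)
  have "j \<noteq> Suc i" "i \<noteq> Suc j" using assms by auto
  then show "Suc j < i \<or> Suc i < j" using assms(5) by linarith
qed

lemma indep:
  "A \<subseteq> {1..n} \<Longrightarrow> reduced_word n (sigma n A) r1 \<Longrightarrow> reduced_word n (sigma n A) r2 \<Longrightarrow>
   foldr dd r1 F = foldr dd r2 F"
proof (induction "length r1" arbitrary: A r1 r2 rule: less_induct)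
  case less
  have l12: "length r1 = length r2" using less.prems unfolding reduced_word_def by simp
  show ?case
  proof (cases r1)
    case Nil
    then show ?thesis using l12 by simp
  next
    case (Cons i u1)
    then obtain j u2 where r2: "r2 = j # u2" using l12 by (cases r2) auto
    have I: "1 \<le> i" "i < n" "i \<in> A" "Suc i \<notin> A" "reduced_word n (sigma n (Ai A i)) u1"
      using rw_first[OF less.prems(1)] less.prems(2) Cons by auto
    have J: "1 \<le> j" "j < n" "j \<in> A" "Suc j \<notin> A" "reduced_word n (sigma n (Ai A j)) u2"
      using rw_first[OF less.prems(1)] less.prems(3) r2 by auto
    have sub_i: "Ai A i \<subseteq> {1..n}" using Ai_sub[OF less.prems(1) I(1,2)] .
    have sub_j: "Ai A j \<subseteq> {1..n}" using Ai_sub[OF less.prems(1) J(1,2)] .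
    show ?thesis
    proof (cases "i = j")
      case True
      have "length u1 < length r1" using Cons by simp
      then have "foldr dd u1 F = foldr dd u2 F" using less.hyps[OF _ sub_i I(5)] J(5) True by blast
      then show ?thesis using Cons r2 True by simp
    next
      case False
      note D = Ai_desc_other[OF I(3,4) J(3,4) False]
      note D' = Ai_desc_other[OF J(3,4) I(3,4) False[symmetric]]
      let ?B = "Ai (Ai A i) j"
      have subB: "?B \<subseteq> {1..n}" using Ai_sub[OF sub_i J(1,2)] .
      obtain u where u: "reduced_word n (sigma n ?B) u" using rw_exists[OF subB] by blast
      have ju: "reduced_word n (sigma n (Ai A i)) (j # u)" using rw_cons[OF sub_i J(1,2) D(1,2) u] .
      have iu: "reduced_word n (sigma n (Ai A j)) (i # u)" using rw_cons[OF sub_j I(1,2) D'(1,2)] u D(3) by simp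
      have "length u1 < length r1" "length u2 < length r1" using Cons r2 l12 by auto
      then have e1: "foldr dd u1 F = dd j (foldr dd u F)" and e2: "foldr dd u2 F = dd i (foldr dd u F)"
        using less.hyps[OF _ sub_i I(5) ju] less.hyps[OF _ sub_j J(5) iu] by auto
      have "foldr dd r1 F = dd i (dd j (foldr dd u F))" using Cons e1 by simp
      also have "\<dots> = dd j (dd i (foldr dd u F))" using dd_comm D(4) by metis
      also have "\<dots> = foldr dd r2 F" using r2 e2 by simp
      finally show ?thesis .
    qed
  qed
qed

lemma D_desc:
  assumes An: "A \<subseteq> {1..n}" and i: "1 \<le> i" "i < n" and d: "i \<in> A" "Suc i \<notin> A"
  shows "dd_perm n (sigma n A) F = dd i (dd_perm n (sigma n (Ai A i)) F)"
proof -
  have sub: "Ai A i \<subseteq> {1..n}" using Ai_sub[OF An i] .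
  let ?r = "SOME is. reduced_word n (sigma n (Ai A i)) is"
  have r: "reduced_word n (sigma n (Ai A i)) ?r" using rw_exists[OF sub] by (metis someI_ex)
  have r1: "reduced_word n (sigma n A) (i # ?r)" using rw_cons[OF An i d r] .
  have r2: "reduced_word n (sigma n A) (SOME is. reduced_word n (sigma n A) is)" using r1 by (metis someI_ex)
  have "dd_perm n (sigma n A) F = foldr dd (i # ?r) F"
    unfolding dd_perm_def using indep[OF An r2 r1] .
  then show ?thesis unfolding dd_perm_def by simp
qed

lemma D_tau: "k \<le> n \<Longrightarrow> dd_perm n (sigma n (tau n k)) F = F"
proof -
  assume "k \<le> n"
  then have e: "sigma n (tau n k) = id" by (rule sigma_tau)
  have "reduced_word n id []" unfolding reduced_word_def using inv_id by simp
  then have "(SOME is. reduced_word n id is) = []" using rw_id by (metis someI_ex)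
  then show ?thesis unfolding dd_perm_def e by simp
qed



lemma succ_mono:
  assumes "\<forall>i. 1 \<le> i \<and> i < n \<longrightarrow> f i < (f (Suc i) :: nat)"
  shows "strict_mono_on {1..n} f"
proof (rule strict_mono_onI)
  fix x y assume xy: "x \<in> {1..n}" "y \<in> {1..n}" "x < y"
  have A: "1 \<le> j \<Longrightarrow> j < n \<Longrightarrow> f j < f (Suc j)" for j using assms by blast
  have "x + Suc d \<le> n \<longrightarrow> f x < f (x + Suc d)" for d
  proof (induction d)
    case 0
    show ?case
    proof
      assume "x + Suc 0 \<le> n"
      then have "1 \<le> x" "x < n" using xy(1) by auto
      then have "f x < f (Suc x)" by (rule A)
      then show "f x < f (x + Suc 0)" by simp
    qed
  next
    case (Suc d)
    show ?case
    proof
      assume h: "x + Suc (Suc d) \<le> n"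
      then have "f x < f (x + Suc d)" using Suc.IH by simp
      moreover have "1 \<le> x + Suc d" "x + Suc d < n" using h by auto
      then have "f (x + Suc d) < f (Suc (x + Suc d))" by (rule A)
      ultimately show "f x < f (x + Suc (Suc d))" by simp
    qed
  qed
  moreover define d where "d = y - x - 1"
  then have "y = x + Suc d" using xy(3) by simp
  ultimately show "f x < f y" using xy(2) by auto
qed

lemma nonid_desc:
  assumes w: "w permutes {1..n}" and ne: "w \<noteq> id"
  shows "\<exists>i p q. 1 \<le> i \<and> i < n \<and> p \<in> {1..n} \<and> q \<in> {1..n} \<and> w p = i \<and> w q = Suc i \<and> q < p"
proof (rule ccontr)
  assume H: "\<not> ?thesis"
  let ?v = "inv w"
  have v: "?v permutes {1..n}" using permutes_inv[OF w] .
  have "?v i < ?v (Suc i)" if i: "1 \<le> i" "i < n" for i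
  proof -
    have p: "?v i \<in> {1..n}" "w (?v i) = i" using permutes_in_image[OF v] i permutes_inverses[OF w] by auto
    have q: "?v (Suc i) \<in> {1..n}" "w (?v (Suc i)) = Suc i" using permutes_in_image[OF v] i permutes_inverses[OF w] by auto
    have "?v i \<noteq> ?v (Suc i)" using p(2) q(2) by (metis n_not_Suc_n)
    moreover have "\<not> ?v (Suc i) < ?v i" using H i p q by blast
    ultimately show ?thesis by simp
  qed
  then have sm: "strict_mono_on {1..n} ?v" by (intro succ_mono) auto
  have vid: "?v x = x" for x
  proof (cases "x \<in> {1..n}")
    case True
    have "?v ` {1..n} = id ` {1..n}" using permutes_image[OF v] by simp
    then show ?thesis using smo_unique[OF sm strict_mono_on_id _ True] by simp
  next
    case False then show ?thesis using permutes_not_in[OF v] by simp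
  qed
  have "w = id"
  proof
    fix x show "w x = id x" using permutes_inverses(1)[OF w, of x] vid[of x] by simp
  qed
  then show False using ne by simp
qed

lemma s_image: "(i \<in> B \<longleftrightarrow> Suc i \<in> B) \<Longrightarrow> s i ` B = B"
proof -
  assume h: "i \<in> B \<longleftrightarrow> Suc i \<in> B"
  show ?thesis
  proof (cases "i \<in> B")
    case True then show ?thesis using h unfolding s_def by simp
  next
    case False
    then have "\<forall>x\<in>B. s i x = x" using h by (auto simp: s_apply)
    then show ?thesis by simp
  qed
qed

lemma gen:
  assumes SF: "\<forall>j. 1 \<le> j \<and> j < n \<and> j \<noteq> n - k \<longrightarrow> S j F = F"
  shows "w permutes {1..n} \<Longrightarrow> w ` {1..n - k} = {1..n - k} \<Longrightarrow> perm_poly w F = F"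
proof (induction "inv_count n w" arbitrary: w rule: less_induct)
  case less
  show ?case
  proof (cases "w = id")
    case True then show ?thesis by (simp add: perm_id)
  next
    case False
    then obtain i p q where ipq: "1 \<le> i" "i < n" "p \<in> {1..n}" "q \<in> {1..n}" "w p = i" "w q = Suc i" "q < p"
      using nonid_desc[OF less.prems(1)] by blast
    have inj: "w a = w b \<Longrightarrow> a = b" for a b using permutes_inj[OF less.prems(1)] by (meson injD)
    have ink: "i \<noteq> n - k"
    proof
      assume e: "i = n - k"
      then have "i \<in> w ` {1..n - k}" using less.prems(2) ipq(1) by simp
      then obtain p' where "p' \<in> {1..n - k}" "w p' = i" by auto
      then have pb: "p \<le> n - k" using inj ipq(5) by fastforce
      have "q \<notin> {1..n - k}"
      proof
        assume "q \<in> {1..n - k}"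
        then have "w q \<in> {1..n - k}" using less.prems(2) by blast
        then show False using ipq(6) e by simp
      qed
      then show False using pb ipq(4,7) by auto
    qed
    let ?w' = "s i \<circ> w"
    have w'p: "?w' permutes {1..n}" using permutes_compose[OF less.prems(1) s_permutes[OF ipq(1,2)]] .
    have lt: "inv_count n ?w' < inv_count n w" using inv_step(2)[OF less.prems(1) ipq(1,2) ipq(3,5) ipq(4,6) ipq(7)] by simp
    have mem: "i \<in> {1..n - k} \<longleftrightarrow> Suc i \<in> {1..n - k}" using ink ipq(1) by auto
    have "?w' ` {1..n - k} = s i ` (w ` {1..n - k})" by (rule image_comp[symmetric])
    also have "\<dots> = s i ` {1..n - k}" by (simp only: less.prems(2))
    also have "\<dots> = {1..n - k}" by (rule s_image[OF mem])
    finally have "?w' ` {1..n - k} = {1..n - k}" .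
    then have IH: "perm_poly ?w' F = F" using less.hyps[OF lt w'p] by blast
    have "w = s i \<circ> ?w'" unfolding comp_assoc[symmetric] s_s by simp
    then have "perm_poly w F = S i (perm_poly ?w' F)" using perm_comp[of "s i" ?w' F] permutes_bij[OF w'p] by simp
    also have "\<dots> = F" using IH SF ipq(1,2) ink by simp
    finally show ?thesis .
  qed
qed



lemma tau_mem: "k \<le> n \<Longrightarrow> x \<in> tau n k \<longleftrightarrow> n - k + 1 \<le> x \<and> x \<le> n" by (simp add: tau_def)

lemma tau_nodesc: "k \<le> n \<Longrightarrow> i < n \<Longrightarrow> (i \<notin> tau n k \<and> Suc i \<in> tau n k) \<longleftrightarrow> i = n - k"
  by (auto simp: tau_mem)

lemma LR_D1: "LR n f \<Longrightarrow> 1 \<le> i \<Longrightarrow> i < n \<Longrightarrow> C \<subseteq> {1..n} \<Longrightarrow> \<not> (i \<notin> C \<and> Suc i \<in> C) \<Longrightarrow> S i (f C) = f C"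
  unfolding LR_def by blast

lemma LR_D2: "LR n f \<Longrightarrow> 1 \<le> i \<Longrightarrow> i < n \<Longrightarrow> C \<subseteq> {1..n} \<Longrightarrow> i \<notin> C \<Longrightarrow> Suc i \<in> C \<Longrightarrow> f (insert i (C - {Suc i})) = dd i (f C)"
  unfolding LR_def by blast

lemma word_eval:
  assumes LR: "LR n f"
  shows "A \<subseteq> {1..n} \<Longrightarrow> reduced_word n (sigma n A) r \<Longrightarrow> foldr dd r (f (tau n (card A))) = f A"
proof (induction r arbitrary: A)
  case Nil
  then have "A = tau n (card A)" by (rule rw_nil)
  then show ?case by simp
next
  case (Cons i r)
  have I: "1 \<le> i" "i < n" "i \<in> A" "Suc i \<notin> A" "reduced_word n (sigma n (Ai A i)) r"
    using rw_first[OF Cons.prems] by auto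
  have sub: "Ai A i \<subseteq> {1..n}" using Ai_sub[OF Cons.prems(1) I(1,2)] .
  have c: "card (Ai A i) = card A" using Ai_card[OF Cons.prems(1) I(3,4)] .
  have IH: "foldr dd r (f (tau n (card A))) = f (Ai A i)" using Cons.IH[OF sub I(5)] c by simp
  have d: "i \<notin> Ai A i" "Suc i \<in> Ai A i" by (auto simp: Ai_def)
  have e: "insert i (Ai A i - {Suc i}) = A" using I(3,4) by (auto simp: Ai_def)
  have "f (insert i (Ai A i - {Suc i})) = dd i (f (Ai A i))"
    by (rule LR_D2[OF LR I(1,2) sub d])
  then show ?case using IH e by simp
qed

lemma fwd:
  assumes Pn: "\<forall>A. f A \<in> Pn n" and LR: "LR n f" and k: "k \<le> n"
  shows "f (tau n k) \<in> sym_block n k \<and>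
        (\<forall>A. A \<subseteq> {1..n} \<and> card A = k \<longrightarrow> f A = dd_perm n (sigma n A) (f (tau n k)))"
proof
  have SF: "\<forall>j. 1 \<le> j \<and> j < n \<and> j \<noteq> n - k \<longrightarrow> S j (f (tau n k)) = f (tau n k)"
  proof (intro allI impI)
    fix j assume j: "1 \<le> j \<and> j < n \<and> j \<noteq> n - k"
    then have "\<not> (j \<notin> tau n k \<and> Suc j \<in> tau n k)" using tau_nodesc[OF k] by simp
    then show "S j (f (tau n k)) = f (tau n k)" using LR_D1[OF LR _ _ tau_sub] j by blast
  qed
  show "f (tau n k) \<in> sym_block n k"
    unfolding sym_block_def
  proof (intro CollectI conjI allI impI)
    show "f (tau n k) \<in> Pn n" using Pn by simp
    fix w assume "w permutes {1..n} \<and> w ` {1..n - k} = {1..n - k}"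
    then show "perm_poly w (f (tau n k)) = f (tau n k)" using gen[OF SF] by blast
  qed
  show "\<forall>A. A \<subseteq> {1..n} \<and> card A = k \<longrightarrow> f A = dd_perm n (sigma n A) (f (tau n k))"
  proof (intro allI impI)
    fix A assume A: "A \<subseteq> {1..n} \<and> card A = k"
    have r: "reduced_word n (sigma n A) (SOME is. reduced_word n (sigma n A) is)"
      using rw_exists A by (metis someI_ex)
    show "f A = dd_perm n (sigma n A) (f (tau n k))"
      unfolding dd_perm_def using word_eval[OF LR _ r] A by simp
  qed
qed



lemma Ai_mem: "x \<in> Ai A j \<longleftrightarrow> x = Suc j \<or> (x \<in> A \<and> x \<noteq> j)" by (auto simp: Ai_def)

lemma Sym:
  assumes SF: "\<forall>j. 1 \<le> j \<and> j < n \<and> j \<noteq> n - k \<longrightarrow> S j F = F"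
  shows "C \<subseteq> {1..n} \<Longrightarrow> card C = k \<Longrightarrow> 1 \<le> i \<Longrightarrow> i < n \<Longrightarrow> (i \<in> C \<longleftrightarrow> Suc i \<in> C) \<Longrightarrow>
    S i (dd_perm n (sigma n C) F) = dd_perm n (sigma n C) F"
proof (induction "inv_count n (sigma n C)" arbitrary: C i rule: less_induct)
  case less
  note C = less.prems
  show ?case
  proof (cases "C = tau n (card C)")
    case True
    have kn': "k \<le> n" using kn[OF C(1)] C(2) by simp
    have Ct: "C = tau n k" using True C(2) by simp
    have "i \<noteq> n - k" using tau_nodesc[OF kn' C(4)] C(5) Ct by blast
    then have "S i F = F" using SF C(3,4) by blast
    then show ?thesis using D_tau[OF kn'] Ct by simp
  next
    case False
    obtain j where j: "1 \<le> j" "j < n" "j \<in> C" "Suc j \<notin> C" using desc_exists[OF C(1) False] by blast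
    let ?Cj = "Ai C j"
    have subj: "?Cj \<subseteq> {1..n}" using Ai_sub[OF C(1) j(1,2)] .
    have cj: "card ?Cj = k" using Ai_card[OF C(1) j(3,4)] C(2) by simp
    have ltj: "inv_count n (sigma n ?Cj) < inv_count n (sigma n C)" using desc_inv(1)[OF C(1) j(1,2)] j(3,4) by simp
    have DC: "dd_perm n (sigma n C) F = dd j (dd_perm n (sigma n ?Cj) F)" using D_desc[OF C(1) j] .
    have ij: "i \<noteq> j" using C(5) j(3,4) by auto
    show ?thesis
    proof (cases "Suc i < j \<or> Suc j < i")
      case True
      have "i \<in> ?Cj \<longleftrightarrow> Suc i \<in> ?Cj" using C(5) True ij by (auto simp: Ai_mem)
      then have IH: "S i (dd_perm n (sigma n ?Cj) F) = dd_perm n (sigma n ?Cj) F"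
        using less.hyps[OF ltj subj cj C(3,4)] by blast
      have "S i (dd j (dd_perm n (sigma n ?Cj) F)) = dd j (S i (dd_perm n (sigma n ?Cj) F))"
        using S_dd_comm True by metis
      then show ?thesis using DC IH by simp
    next
      case False
      then have cases: "i = Suc j \<or> j = Suc i" using ij by linarith
      show ?thesis
      proof (cases "i = Suc j")
        case True
        have si: "Suc i \<notin> C" using C(5) True j(4) by simp
        have sjn: "Suc j < n" using True C(4) by simp
        have dj: "Suc j \<in> ?Cj" "Suc (Suc j) \<notin> ?Cj" using si True by (auto simp: Ai_mem)
        let ?C2 = "Ai ?Cj (Suc j)"
        have sub2: "?C2 \<subseteq> {1..n}" using Ai_sub[OF subj _ sjn] by simp
        have c2: "card ?C2 = k" using Ai_card[OF subj dj] cj by simp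
        have lt2: "inv_count n (sigma n ?C2) < inv_count n (sigma n C)"
          using desc_inv(1)[OF subj _ sjn] dj ltj by simp
        have m2: "j \<in> ?C2 \<longleftrightarrow> Suc j \<in> ?C2" by (auto simp: Ai_mem)
        let ?h = "dd_perm n (sigma n ?C2) F"
        have Sh: "S j ?h = ?h" using less.hyps[OF lt2 sub2 c2 j(1,2) m2] .
        have DCj: "dd_perm n (sigma n ?Cj) F = dd (Suc j) ?h" using D_desc[OF subj _ sjn dj] by simp
        have "dd (Suc j) (dd j (dd (Suc j) ?h)) = dd j (dd (Suc j) (dd j ?h))" using braid by metis
        also have "\<dots> = 0" using Sh by (simp add: dd_zero_iff[THEN iffD2] dd_0)
        finally have "S (Suc j) (dd j (dd (Suc j) ?h)) = dd j (dd (Suc j) ?h)" using dd_zero_iff by metis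
        then show ?thesis using DC DCj True by simp
      next
        case F2: False
        then have ji: "j = Suc i" using cases by simp
        have iC: "i \<in> C" using C(5) ji j(3) by simp
        have sin: "Suc i < n" using ji j(2) by simp
        have di: "i \<in> ?Cj" "Suc i \<notin> ?Cj" using iC ji by (auto simp: Ai_mem)
        let ?C2 = "Ai ?Cj i"
        have sub2: "?C2 \<subseteq> {1..n}" using Ai_sub[OF subj C(3,4)] .
        have c2: "card ?C2 = k" using Ai_card[OF subj di] cj by simp
        have lt2: "inv_count n (sigma n ?C2) < inv_count n (sigma n C)"
          using desc_inv(1)[OF subj C(3,4)] di ltj by simp
        have m2: "Suc i \<in> ?C2 \<longleftrightarrow> Suc (Suc i) \<in> ?C2" using ji j(3) by (auto simp: Ai_mem)
        let ?h = "dd_perm n (sigma n ?C2) F"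
        have Sh: "S (Suc i) ?h = ?h" using less.hyps[OF lt2 sub2 c2 _ sin m2] by simp
        have DCj: "dd_perm n (sigma n ?Cj) F = dd i ?h" using D_desc[OF subj C(3,4) di] .
        have "dd i (dd (Suc i) (dd i ?h)) = dd (Suc i) (dd i (dd (Suc i) ?h))" using braid by metis
        also have "\<dots> = 0" using Sh by (simp add: dd_zero_iff[THEN iffD2] dd_0)
        finally have "S i (dd (Suc i) (dd i ?h)) = dd (Suc i) (dd i ?h)" using dd_zero_iff by metis
        then show ?thesis using DC DCj ji by simp
      qed
    qed
  qed
qed



lemma SF_of_sym:
  assumes "F \<in> sym_block n k"
  shows "\<forall>j. 1 \<le> j \<and> j < n \<and> j \<noteq> n - k \<longrightarrow> S j F = F"
proof (intro allI impI)
  fix j assume j: "1 \<le> j \<and> j < n \<and> j \<noteq> n - k"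
  have "s j permutes {1..n}" using s_permutes j by blast
  moreover have "s j ` {1..n - k} = {1..n - k}" using j by (intro s_image) auto
  ultimately show "S j F = F" using assms unfolding sym_block_def by blast
qed

lemma bwd:
  assumes H: "\<forall>k\<le>n. f (tau n k) \<in> sym_block n k \<and>
        (\<forall>A. A \<subseteq> {1..n} \<and> card A = k \<longrightarrow> f A = dd_perm n (sigma n A) (f (tau n k)))"
  shows "LR n f"
  unfolding LR_def
proof (intro allI impI conjI)
  fix i C assume h: "1 \<le> i \<and> i < n \<and> C \<subseteq> {1..n}"
  define k where "k = card C"
  have kn': "k \<le> n" using kn h k_def by blast
  define F where "F = f (tau n k)"
  have SF: "\<forall>j. 1 \<le> j \<and> j < n \<and> j \<noteq> n - k \<longrightarrow> S j F = F" using SF_of_sym H kn' F_def by blast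
  have fD: "f B = dd_perm n (sigma n B) F" if "B \<subseteq> {1..n}" "card B = k" for B
    using H kn' that F_def by blast
  have fC: "f C = dd_perm n (sigma n C) F" using fD h k_def by blast
  show "S i (f C) = f C" if nd: "\<not> (i \<notin> C \<and> Suc i \<in> C)"
  proof (cases "i \<in> C \<and> Suc i \<notin> C")
    case True
    have "f C = dd i (dd_perm n (sigma n (Ai C i)) F)" using fC D_desc[of C n i F] h True by simp
    then show ?thesis using dd_sym by metis
  next
    case False
    then have "i \<in> C \<longleftrightarrow> Suc i \<in> C" using nd by blast
    then show ?thesis using Sym[OF SF] h k_def fC by simp
  qed
  assume c: "i \<notin> C \<and> Suc i \<in> C"
  let ?X = "insert i (C - {Suc i})"
  have Xs: "?X \<subseteq> {1..n}" using h by auto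
  have dX: "i \<in> ?X" "Suc i \<notin> ?X" by auto
  have AX: "Ai ?X i = C" using c by (auto simp: Ai_def)
  have cX: "card ?X = k"
  proof -
    have "card (Ai ?X i) = card ?X" using Ai_card[OF Xs dX] .
    then show ?thesis using AX k_def by simp
  qed
  have "f ?X = dd_perm n (sigma n ?X) F" using fD[OF Xs cX] .
  also have "\<dots> = dd i (dd_perm n (sigma n C) F)" using D_desc[OF Xs _ _ dX] h AX by simp
  also have "\<dots> = dd i (f C)" using fC by simp
  finally show "f ?X = dd i (f C)" .
qed

theorem corollary3p3:
  fixes n :: nat and f :: "nat set \<Rightarrow> mpoly"
  assumes "\<forall>A. f A \<in> Pn n"
    and "\<forall>A. \<not> A \<subseteq> {1..n} \<longrightarrow> f A = 0"
  shows "in_Lambda n f \<longleftrightarrow>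
     (\<forall>k \<le> n. f (tau n k) \<in> sym_block n k \<and>
        (\<forall>A. A \<subseteq> {1..n} \<and> card A = k \<longrightarrow> f A = dd_perm n (sigma n A) (f (tau n k))))"
proof -
  have "in_Lambda n f \<longleftrightarrow> LR n f" using in_Lambda_iff_LR[OF assms(2)] .
  also have "\<dots> \<longleftrightarrow> (\<forall>k \<le> n. f (tau n k) \<in> sym_block n k \<and>
        (\<forall>A. A \<subseteq> {1..n} \<and> card A = k \<longrightarrow> f A = dd_perm n (sigma n A) (f (tau n k))))"
    using fwd[OF assms(1)] bwd by blast
  finally show ?thesis .
qed


end
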